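(* Let $SG$ be a signed graph and $e$ a positive edge. There is a long exact sequence of graded abelian groups (degree-preserving maps) $$\cdots\to H_b^{i-1}(SG/e)\to H_b^i(SG)\to H_b^i(SG-e)\to H_b^i(SG/e)\to H_b^{i+1}(SG)\to\cdots.$$
   Context: Signed graphs: $SG=(G,\sigma)$, $G$ finite (loops, multiple edges allowed), $\sigma:E(G)\to\{\pm1\}$; $e$ positive means $\sigma(e)=1$. $SG-e$: delete $e$. $SG/e$: for non-loop $e$, delete $e$ and identify its endpoints, other edges keeping signs; for a loop, $SG/e=SG-e$. Negative circuit: product of edge signs $-1$; balanced = no negative circuit. $[G:s]$, $[SG:s]$: spanning subgraph with edge set $s$. Balanced chromatic cohomology: Fix a total order on $E(G)$. An enhanced state of $G$ is $S=(s,c)$, $c$ labels each component of $[G:s]$ by $1$ or $x$; $j(S)$ = number of $x$-labels (the grading). With $m(1,1)=1$, $m(1,x)=m(x,1)=x$, $m(x,x)=0$: for $e'\notin s$, $S_{e'}=(s\cup\{e'\},c_{e'})$ where a component containing both ends of $e'$ keeps its label and if $e'$ joins components $E_i,E_j$ the merged one gets $m(c(E_i),c(E_j))$ ($S_{e'}=0$ if both are $x$). $d(S)=\sum_{e'\notin s}(-1)^{n(e')}S_{e'}$, $n(e')$ = number of edges of $s$ preceding $e'$. $C^i_b(SG)$ is free on enhanced states with $|s|=i$ and $[SG:s]$ balanced; $f_b$ projects enhanced states of $G$ onto these (others to $0$); $d_b=f_b\circ d$; $H^i_b(SG)$ its cohomology. *)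

theory Defs
  imports "HOL-Algebra.Coset"
begin

text \<open>The edge type carries a total order (the fixed total
  order on E(G)); deletion and contraction use the induced order.\<close>

record ('v, 'e) sgraph =
  verts :: "'v set"
  edges :: "'e set"
  ends  :: "'e \<Rightarrow> 'v \<times> 'v"
  sgn   :: "'e \<Rightarrow> int"

definition wf_sgraph :: "('v, 'e) sgraph \<Rightarrow> bool" where
  "wf_sgraph G \<longleftrightarrow> finite (verts G) \<and> finite (edges G) \<and>
     (\<forall>f\<in>edges G. fst (ends G f) \<in> verts G \<and> snd (ends G f) \<in> verts G
                  \<and> sgn G f \<in> {1, -1})"

definition delete_edge :: "('v, 'e) sgraph \<Rightarrow> 'e \<Rightarrow> ('v, 'e) sgraph" where
  "delete_edge G e = G\<lparr>edges := edges G - {e}\<rparr>"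

definition contract_edge :: "('v, 'e) sgraph \<Rightarrow> 'e \<Rightarrow> ('v, 'e) sgraph" where
  "contract_edge G e =
    (let a = fst (ends G e); b = snd (ends G e); r = (\<lambda>x. if x = b then a else x) in
     if a = b then delete_edge G e
     else \<lparr>verts = verts G - {b}, edges = edges G - {e},
           ends = (\<lambda>f. map_prod r r (ends G f)), sgn = sgn G\<rparr>)"

definition adj :: "('v, 'e) sgraph \<Rightarrow> 'e set \<Rightarrow> ('v \<times> 'v) set" where
  "adj G s = {(a, b). \<exists>f\<in>s. ends G f = (a, b) \<or> ends G f = (b, a)}"

definition conn_rel :: "('v, 'e) sgraph \<Rightarrow> 'e set \<Rightarrow> ('v \<times> 'v) set" where
  "conn_rel G s = {(x, y). x \<in> verts G \<and> y \<in> verts G \<and> (x, y) \<in> (adj G s)\<^sup>*}"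

definition comps :: "('v, 'e) sgraph \<Rightarrow> 'e set \<Rightarrow> 'v set set" where
  "comps G s = verts G // conn_rel G s"

text \<open>A circuit of [G:s]: distinct edges es!0..es!(k-1) of s and distinct vertices
  vs!0..vs!(k-1), k \<ge> 1, where es!i joins vs!i and vs!((i+1) mod k).
  (k = 1: a loop; k = 2: two parallel edges.)\<close>
definition circuit :: "('v, 'e) sgraph \<Rightarrow> 'e set \<Rightarrow> 'e list \<Rightarrow> 'v list \<Rightarrow> bool" where
  "circuit G s es vs \<longleftrightarrow> length es = length vs \<and> length es \<ge> 1 \<and>
     distinct es \<and> distinct vs \<and> set es \<subseteq> s \<and>
     (\<forall>i < length es. {fst (ends G (es ! i)), snd (ends G (es ! i))}
                        = {vs ! i, vs ! (Suc i mod length es)})"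

definition balanced :: "('v, 'e) sgraph \<Rightarrow> 'e set \<Rightarrow> bool" where
  "balanced G s \<longleftrightarrow> \<not> (\<exists>es vs. circuit G s es vs \<and> prod_list (map (sgn G) es) = -1)"

text \<open>An enhanced state is (s, c) with c a labelling of the components of [G:s];
  c X = True means label x, False means label 1; c is False off the components.\<close>
type_synonym ('v, 'e) estate = "'e set \<times> ('v set \<Rightarrow> bool)"

definition xdeg :: "('v, 'e) sgraph \<Rightarrow> ('v, 'e) estate \<Rightarrow> nat" where
  "xdeg G S = card {X \<in> comps G (fst S). snd S X}"

definition bstates :: "('v, 'e) sgraph \<Rightarrow> nat \<Rightarrow> nat \<Rightarrow> ('v, 'e) estate set" where
  "bstates G i j = {(s, c). s \<subseteq> edges G \<and> card s = i \<and> balanced G s \<and>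
      (\<forall>X. X \<notin> comps G s \<longrightarrow> \<not> c X) \<and> xdeg G (s, c) = j}"

text \<open>Labels of S_{e'}: a new component gets label x iff it contains an old component
  labelled x (m(1,1)=1, m(1,x)=m(x,1)=x); S_{e'} = 0 iff a new component contains two
  old components labelled x (m(x,x) = 0).\<close>
definition ext_label :: "('v, 'e) sgraph \<Rightarrow> 'e set \<Rightarrow> ('v set \<Rightarrow> bool) \<Rightarrow> 'e \<Rightarrow> 'v set \<Rightarrow> bool" where
  "ext_label G s c e' = (\<lambda>Y. Y \<in> comps G (insert e' s) \<and>
      (\<exists>X\<in>comps G s. X \<subseteq> Y \<and> c X))"

definition ext_vanishes :: "('v, 'e) sgraph \<Rightarrow> 'e set \<Rightarrow> ('v set \<Rightarrow> bool) \<Rightarrow> 'e \<Rightarrow> bool" where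
  "ext_vanishes G s c e' \<longleftrightarrow> (\<exists>Y\<in>comps G (insert e' s).
      card {X \<in> comps G s. X \<subseteq> Y \<and> c X} \<ge> 2)"

text \<open>Coefficient of the basis state T in d_b(S) = f_b(d S).\<close>
definition dcoef :: "('v, 'e::linorder) sgraph \<Rightarrow> ('v, 'e) estate \<Rightarrow> ('v, 'e) estate \<Rightarrow> int" where
  "dcoef G S T = (if balanced G (fst T) then
      (\<Sum>e'\<in>edges G - fst S.
         if \<not> ext_vanishes G (fst S) (snd S) e' \<and>
            T = (insert e' (fst S), ext_label G (fst S) (snd S) e')
         then (-1) ^ card {f \<in> fst S. f < e'} else 0)
    else 0)"

text \<open>The free abelian group on a finite basis B, as finitely supported Z-valued
  functions (a multiplicative monoid record of HOL-Algebra).\<close>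
definition free_ab :: "'a set \<Rightarrow> ('a \<Rightarrow> int) monoid" where
  "free_ab B = \<lparr>carrier = {f. \<forall>x. x \<notin> B \<longrightarrow> f x = 0},
                mult = (\<lambda>f g x. f x + g x), one = (\<lambda>x. 0)\<rparr>"

definition cochains :: "('v, 'e) sgraph \<Rightarrow> nat \<Rightarrow> nat \<Rightarrow> (('v, 'e) estate \<Rightarrow> int) monoid" where
  "cochains G i j = free_ab (bstates G i j)"

definition dmap :: "('v, 'e::linorder) sgraph \<Rightarrow> nat \<Rightarrow> nat \<Rightarrow>
    (('v, 'e) estate \<Rightarrow> int) \<Rightarrow> (('v, 'e) estate \<Rightarrow> int)" where
  "dmap G i j f = (\<lambda>T. if T \<in> bstates G (Suc i) j
       then (\<Sum>S\<in>bstates G i j. f S * dcoef G S T) else 0)"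

definition bcohom :: "('v, 'e::linorder) sgraph \<Rightarrow> nat \<Rightarrow> nat \<Rightarrow>
    (('v, 'e) estate \<Rightarrow> int) set monoid" where
  "bcohom G i j =
     ((cochains G i j)\<lparr>carrier := kernel (cochains G i j) (cochains G (Suc i) j) (dmap G i j)\<rparr>)
     Mod (case i of 0 \<Rightarrow> {\<lambda>x. 0}
                  | Suc k \<Rightarrow> dmap G k j ` carrier (cochains G k j))"

end

theory Submission
  imports Defs "HOL-Library.Function_Algebras"
begin

definition car :: "'a set \<Rightarrow> ('a \<Rightarrow> int) set" where
  "car B = {f. \<forall>x. x \<notin> B \<longrightarrow> f x = 0}"

lemma car_zero[simp]: "0 \<in> car B" by (simp add: car_def)
lemma car_add[simp]: "f \<in> car B \<Longrightarrow> g \<in> car B \<Longrightarrow> f + g \<in> car B" by (simp add: car_def)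
lemma car_uminus[simp]: "f \<in> car B \<Longrightarrow> - f \<in> car B" by (simp add: car_def)
lemma car_diff[simp]: "f \<in> car B \<Longrightarrow> g \<in> car B \<Longrightarrow> f - g \<in> car B" by (simp add: car_def)

definition lin :: "'a set \<Rightarrow> 'b set \<Rightarrow> (('a \<Rightarrow> int) \<Rightarrow> ('b \<Rightarrow> int)) \<Rightarrow> bool" where
  "lin B B' f \<longleftrightarrow> (\<forall>x\<in>car B. f x \<in> car B') \<and> (\<forall>x\<in>car B. \<forall>y\<in>car B. f (x + y) = f x + f y)"

lemma lin_car: "lin B B' f \<Longrightarrow> x \<in> car B \<Longrightarrow> f x \<in> car B'" by (simp add: lin_def)
lemma lin_add: "lin B B' f \<Longrightarrow> x \<in> car B \<Longrightarrow> y \<in> car B \<Longrightarrow> f (x + y) = f x + f y"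
  by (simp add: lin_def)
lemma lin_zero: "lin B B' f \<Longrightarrow> f 0 = 0"
  using lin_add[of B B' f 0 0] by simp
lemma lin_uminus: "lin B B' f \<Longrightarrow> x \<in> car B \<Longrightarrow> f (- x) = - f x"
proof -
  assume a: "lin B B' f" "x \<in> car B"
  have "f x + f (- x) = 0" using lin_add[OF a(1) a(2), of "-x"] lin_zero[OF a(1)] a by simp
  then show ?thesis by (metis add.commute minus_unique)
qed
lemma lin_diff: "lin B B' f \<Longrightarrow> x \<in> car B \<Longrightarrow> y \<in> car B \<Longrightarrow> f (x - y) = f x - f y"
  using lin_add[of B B' f x "-y"] lin_uminus[of B B' f y] by simp

definition cs :: "('a \<Rightarrow> int) set \<Rightarrow> ('a \<Rightarrow> int) \<Rightarrow> ('a \<Rightarrow> int) set" where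
  "cs I a = (\<lambda>h. h + a) ` I"

definition sgrp :: "('a \<Rightarrow> int) set \<Rightarrow> bool" where
  "sgrp I \<longleftrightarrow> 0 \<in> I \<and> (\<forall>x\<in>I. \<forall>y\<in>I. x + y \<in> I) \<and> (\<forall>x\<in>I. - x \<in> I)"

lemma sgrp_diff: "sgrp I \<Longrightarrow> x \<in> I \<Longrightarrow> y \<in> I \<Longrightarrow> x - y \<in> I"
  unfolding sgrp_def by (metis diff_conv_add_uminus)

lemma cs_mem: "sgrp I \<Longrightarrow> a \<in> cs I a"
proof -
  assume "sgrp I" then have "0 \<in> I" by (simp add: sgrp_def)
  then show ?thesis unfolding cs_def using image_eqI[of a "\<lambda>h. h+a" 0 I] by simp
qed

lemma cs_eq: assumes "sgrp I" shows "cs I a = cs I b \<longleftrightarrow> a - b \<in> I"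
proof
  assume "cs I a = cs I b"
  then have "a \<in> cs I b" using cs_mem[OF assms] by metis
  then show "a - b \<in> I" unfolding cs_def by auto
next
  assume d: "a - b \<in> I"
  show "cs I a = cs I b"
  proof
    show "cs I a \<subseteq> cs I b"
    proof
      fix x assume "x \<in> cs I a"
      then obtain h where h: "h \<in> I" "x = h + a" by (auto simp: cs_def)
      have "h + (a - b) \<in> I" using assms h d by (simp add: sgrp_def)
      moreover have "x = (h + (a - b)) + b" using h by (simp add: algebra_simps)
      ultimately show "x \<in> cs I b" unfolding cs_def using image_eqI[of x "\<lambda>h. h + b" "h + (a - b)" I] by simp
    qed
    show "cs I b \<subseteq> cs I a"
    proof
      fix x assume "x \<in> cs I b"
      then obtain h where h: "h \<in> I" "x = h + b" by (auto simp: cs_def)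
      have "h - (a - b) \<in> I" using assms h d sgrp_diff by blast
      moreover have "x = (h - (a - b)) + a" using h by (simp add: algebra_simps)
      ultimately show "x \<in> cs I a" unfolding cs_def using image_eqI[of x "\<lambda>h. h + a" "h - (a - b)" I] by simp
    qed
  qed
qed

lemma cs_zero: "cs I 0 = I" by (simp add: cs_def)

lemma cs_self: "sgrp I \<Longrightarrow> cs I a = I \<longleftrightarrow> a \<in> I"
  using cs_eq[of I a 0] by (simp add: cs_zero)

lemma cs_mult: assumes "sgrp I"
  shows "(\<Union>h\<in>cs I a. \<Union>k\<in>cs I b. {h + k}) = cs I (a + b)"
proof
  show "(\<Union>h\<in>cs I a. \<Union>k\<in>cs I b. {h + k}) \<subseteq> cs I (a + b)"
  proof
    fix x assume "x \<in> (\<Union>h\<in>cs I a. \<Union>k\<in>cs I b. {h + k})"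
    then obtain h k where hk: "h \<in> I" "k \<in> I" "x = (h + a) + (k + b)" by (auto simp: cs_def)
    then have "h + k \<in> I" using assms unfolding sgrp_def by blast
    moreover have "x = (h + k) + (a + b)" using hk by (simp add: algebra_simps)
    ultimately have "h + k \<in> I" "x = (h + k) + (a + b)" by auto
    then show "x \<in> cs I (a + b)" by (auto simp: cs_def)
  qed
next
  show "cs I (a + b) \<subseteq> (\<Union>h\<in>cs I a. \<Union>k\<in>cs I b. {h + k})"
  proof
    fix x assume "x \<in> cs I (a + b)"
    then obtain h where h: "h \<in> I" "x = h + (a + b)" by (auto simp: cs_def)
    then have "x = (h + a) + (0 + b)" by (simp add: algebra_simps)
    note h = h(1) this
    moreover have "0 \<in> I" using assms by (simp add: sgrp_def)
    ultimately show "x \<in> (\<Union>h\<in>cs I a. \<Union>k\<in>cs I b. {h + k})"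
      unfolding cs_def by blast
  qed
qed

lemma cs_ind:
  assumes "lin B B' f" "sgrp I" "J \<subseteq> car B" "f ` J \<subseteq> I" "b \<in> car B" "0 \<in> J"
  shows "(\<Union>x\<in>cs J b. cs I (f x)) = cs I (f b)"
proof (rule SUP_eq_const)
  show "cs J b \<noteq> {}" unfolding cs_def using assms(6) by blast
  fix x assume "x \<in> cs J b"
  then obtain h where h: "h \<in> J" "x = h + b" unfolding cs_def by blast
  have hc: "h \<in> car B" using h(1) assms(3) by blast
  have "f x = f h + f b" using h(2) lin_add[OF assms(1) hc assms(5)] by simp
  then have "f x - f b = f h" by simp
  moreover have "f h \<in> I" using h(1) assms(4) by blast
  ultimately show "cs I (f x) = cs I (f b)" using cs_eq[OF assms(2)] by simp
qed


definition Imd :: "(nat \<Rightarrow> 'a set) \<Rightarrow> (nat \<Rightarrow> ('a \<Rightarrow> int) \<Rightarrow> ('a \<Rightarrow> int)) \<Rightarrow> nat \<Rightarrow> ('a \<Rightarrow> int) set" where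
  "Imd Bs d i = (case i of 0 \<Rightarrow> {0} | Suc k \<Rightarrow> d k ` car (Bs k))"

definition Zd :: "(nat \<Rightarrow> 'a set) \<Rightarrow> (nat \<Rightarrow> ('a \<Rightarrow> int) \<Rightarrow> ('a \<Rightarrow> int)) \<Rightarrow> nat \<Rightarrow> ('a \<Rightarrow> int) set" where
  "Zd Bs d i = {f \<in> car (Bs i). d i f = 0}"

definition coh :: "(nat \<Rightarrow> 'a set) \<Rightarrow> (nat \<Rightarrow> ('a \<Rightarrow> int) \<Rightarrow> ('a \<Rightarrow> int)) \<Rightarrow> nat \<Rightarrow> ('a \<Rightarrow> int) set monoid" where
  "coh Bs d i = ((free_ab (Bs i))\<lparr>carrier := kernel (free_ab (Bs i)) (free_ab (Bs (Suc i))) (d i)\<rparr>)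
     Mod (case i of 0 \<Rightarrow> {\<lambda>x. 0} | Suc k \<Rightarrow> d k ` carrier (free_ab (Bs k)))"

lemma bcohom_coh: "bcohom G i j = coh (\<lambda>n. bstates G n j) (\<lambda>n. dmap G n j) i"
  unfolding bcohom_def coh_def cochains_def ..

lemma carrier_free_ab: "carrier (free_ab B) = car B"
  by (simp add: free_ab_def car_def)

lemma mult_free_ab: "mult (free_ab B) = (+)"
  by (simp add: free_ab_def plus_fun_def fun_eq_iff)

lemma one_free_ab: "one (free_ab B) = 0"
  by (simp add: free_ab_def zero_fun_def)

lemma coh_carrier: "carrier (coh Bs d i) = cs (Imd Bs d i) ` Zd Bs d i"
proof -
  have I: "(case i of 0 \<Rightarrow> {\<lambda>x. 0} | Suc k \<Rightarrow> d k ` carrier (free_ab (Bs k))) = Imd Bs d i"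
    by (cases i) (simp_all add: Imd_def carrier_free_ab zero_fun_def)
  have K: "kernel (free_ab (Bs i)) (free_ab (Bs (Suc i))) (d i) = Zd Bs d i"
    by (simp add: kernel_def Zd_def carrier_free_ab one_free_ab)
  have R: "r_coset (free_ab (Bs i)\<lparr>carrier := Zd Bs d i\<rparr>) H a = cs H a" for H a
    by (auto simp: r_coset_def cs_def mult_free_ab)
  have "carrier (coh Bs d i) = (\<Union>a\<in>Zd Bs d i. {r_coset (free_ab (Bs i)\<lparr>carrier := Zd Bs d i\<rparr>) (Imd Bs d i) a})"
    unfolding coh_def I K FactGroup_def RCOSETS_def by simp
  then show ?thesis unfolding R by blast
qed

lemma coh_one: "one (coh Bs d i) = Imd Bs d i"
  by (cases i) (simp_all add: coh_def Imd_def carrier_free_ab zero_fun_def)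

lemma coh_mult: "mult (coh Bs d i) X Y = (\<Union>h\<in>X. \<Union>k\<in>Y. {h + k})"
  by (simp add: coh_def FactGroup_def set_mult_def mult_free_ab)

lemma Imd_sgrp: assumes "\<And>n. lin (Bs n) (Bs (Suc n)) (d n)" shows "sgrp (Imd Bs d i)"
proof (cases i)
  case 0 then show ?thesis by (simp add: Imd_def sgrp_def)
next
  case (Suc k)
  have l: "lin (Bs k) (Bs (Suc k)) (d k)" by (rule assms)
  have "0 \<in> d k ` car (Bs k)" using lin_zero[OF l] car_zero by (metis image_eqI)
  moreover have "x + y \<in> d k ` car (Bs k)" if xy: "x \<in> d k ` car (Bs k)" "y \<in> d k ` car (Bs k)" for x y
  proof -
    obtain u v where "u \<in> car (Bs k)" "v \<in> car (Bs k)" "x = d k u" "y = d k v" using xy by blast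
    then show ?thesis using lin_add[OF l, of u v] car_add by (metis image_eqI)
  qed
  moreover have "- x \<in> d k ` car (Bs k)" if xx: "x \<in> d k ` car (Bs k)" for x
  proof -
    obtain u where "u \<in> car (Bs k)" "x = d k u" using xx by blast
    then show ?thesis using lin_uminus[OF l, of u] car_uminus by (metis image_eqI)
  qed
  ultimately show ?thesis using Suc by (simp add: Imd_def sgrp_def)
qed

lemma Imd_car: assumes "\<And>n. lin (Bs n) (Bs (Suc n)) (d n)" shows "Imd Bs d i \<subseteq> car (Bs i)"
proof (cases i)
  case 0 then show ?thesis by (simp add: Imd_def)
next
  case (Suc k) then show ?thesis using lin_car[OF assms] by (auto simp: Imd_def)
qed

lemma lin_inj: "lin B B' f \<Longrightarrow> (\<And>x. x \<in> car B \<Longrightarrow> f x = 0 \<Longrightarrow> x = 0) \<Longrightarrow>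
   x \<in> car B \<Longrightarrow> y \<in> car B \<Longrightarrow> f x = f y \<Longrightarrow> x = y"
  using lin_diff[of B B' f x y] by (metis car_diff diff_self eq_iff_diff_eq_0)

locale ses =
  fixes BA BB BC :: "nat \<Rightarrow> 'a set"
    and dA dB dC al pr :: "nat \<Rightarrow> ('a \<Rightarrow> int) \<Rightarrow> ('a \<Rightarrow> int)"
  assumes linA: "lin (BA n) (BA (Suc n)) (dA n)"
    and linB: "lin (BB n) (BB (Suc n)) (dB n)"
    and linC: "lin (BC n) (BC (Suc n)) (dC n)"
    and ddB: "x \<in> car (BB n) \<Longrightarrow> dB (Suc n) (dB n x) = 0"
    and linal: "lin (BA n) (BB (Suc n)) (al n)"
    and inj_al: "x \<in> car (BA n) \<Longrightarrow> al n x = 0 \<Longrightarrow> x = 0"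
    and linpr: "lin (BB n) (BC n) (pr n)"
    and surj_pr: "c \<in> car (BC n) \<Longrightarrow> \<exists>b\<in>car (BB n). pr n b = c"
    and exact_mid: "b \<in> car (BB (Suc n)) \<Longrightarrow> pr (Suc n) b = 0 \<Longrightarrow> \<exists>a\<in>car (BA n). al n a = b"
    and pr_al: "a \<in> car (BA n) \<Longrightarrow> pr (Suc n) (al n a) = 0"
    and exact0: "b \<in> car (BB 0) \<Longrightarrow> pr 0 b = 0 \<Longrightarrow> b = 0"
    and chain_pr: "b \<in> car (BB n) \<Longrightarrow> pr (Suc n) (dB n b) = dC n (pr n b)"
    and chain_al: "a \<in> car (BA n) \<Longrightarrow> dB (Suc n) (al n a) = al (Suc n) (dA n a)"
begin

abbreviation "IA \<equiv> Imd BA dA"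
abbreviation "IB \<equiv> Imd BB dB"
abbreviation "IC \<equiv> Imd BC dC"
abbreviation "ZA \<equiv> Zd BA dA"
abbreviation "ZB \<equiv> Zd BB dB"
abbreviation "ZC \<equiv> Zd BC dC"

lemma sA: "sgrp (IA i)" by (rule Imd_sgrp) (rule linA)
lemma sB: "sgrp (IB i)" by (rule Imd_sgrp) (rule linB)
lemma sC: "sgrp (IC i)" by (rule Imd_sgrp) (rule linC)
lemma cA: "IA i \<subseteq> car (BA i)" by (rule Imd_car) (rule linA)
lemma cB: "IB i \<subseteq> car (BB i)" by (rule Imd_car) (rule linB)
lemma cC: "IC i \<subseteq> car (BC i)" by (rule Imd_car) (rule linC)
lemma zeroA: "0 \<in> IA i" using sA by (simp add: sgrp_def)
lemma zeroB: "0 \<in> IB i" using sB by (simp add: sgrp_def)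
lemma zeroC: "0 \<in> IC i" using sC by (simp add: sgrp_def)

lemma al_injective: "x \<in> car (BA n) \<Longrightarrow> y \<in> car (BA n) \<Longrightarrow> al n x = al n y \<Longrightarrow> x = y"
  by (rule lin_inj[OF linal inj_al])

lemma pr_I: "pr i ` IB i \<subseteq> IC i"
proof (cases i)
  case 0 then show ?thesis using lin_zero[OF linpr] by (simp add: Imd_def)
next
  case (Suc k)
  show ?thesis
  proof
    fix z assume "z \<in> pr i ` IB i"
    then obtain y where y: "y \<in> car (BB k)" "z = pr (Suc k) (dB k y)" using Suc by (auto simp: Imd_def)
    then have "z = dC k (pr k y)" using chain_pr by simp
    moreover have "pr k y \<in> car (BC k)" using lin_car[OF linpr y(1)] .
    ultimately show "z \<in> IC i" using Suc by (simp add: Imd_def)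
  qed
qed

lemma al_I: "al i ` IA i \<subseteq> IB (Suc i)"
proof (cases i)
  case 0
  have "0 \<in> dB 0 ` car (BB 0)" using lin_zero[OF linB] car_zero image_eqI[of 0 "dB 0" 0 "car (BB 0)"] by simp
  then show ?thesis using lin_zero[OF linal] 0 by (simp add: Imd_def)
next
  case (Suc k)
  show ?thesis
  proof
    fix z assume "z \<in> al i ` IA i"
    then obtain y where y: "y \<in> car (BA k)" "z = al (Suc k) (dA k y)" using Suc by (auto simp: Imd_def)
    then have "z = dB (Suc k) (al k y)" using chain_al by simp
    moreover have "al k y \<in> car (BB (Suc k))" using lin_car[OF linal y(1)] .
    ultimately show "z \<in> IB (Suc i)" using Suc by (simp add: Imd_def)
  qed
qed

definition beta :: "nat \<Rightarrow> ('a \<Rightarrow> int) set \<Rightarrow> ('a \<Rightarrow> int) set" where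
  "beta i X = (\<Union>x\<in>X. cs (IC i) (pr i x))"
definition delta :: "nat \<Rightarrow> ('a \<Rightarrow> int) set \<Rightarrow> ('a \<Rightarrow> int) set" where
  "delta i X = (\<Union>x\<in>X. cs (IB (Suc i)) (al i x))"
definition gamma :: "nat \<Rightarrow> ('a \<Rightarrow> int) set \<Rightarrow> ('a \<Rightarrow> int) set" where
  "gamma i X = (\<Union>c\<in>X. \<Union>{cs (IA i) a | a. a \<in> car (BA i) \<and> (\<exists>b\<in>car (BB i). pr i b = c \<and> al i a = dB i b)})"

lemma beta_cs: "b \<in> car (BB i) \<Longrightarrow> beta i (cs (IB i) b) = cs (IC i) (pr i b)"
  unfolding beta_def by (rule cs_ind[OF linpr sC cB pr_I _ zeroB])

lemma delta_cs: "a \<in> car (BA i) \<Longrightarrow> delta i (cs (IA i) a) = cs (IB (Suc i)) (al i a)"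
  unfolding delta_def by (rule cs_ind[OF linal sB cA al_I _ zeroA])

lemma lift:
  assumes "c \<in> ZC i"
  shows "\<exists>a b. a \<in> ZA i \<and> b \<in> car (BB i) \<and> pr i b = c \<and> al i a = dB i b"
proof -
  have c: "c \<in> car (BC i)" "dC i c = 0" using assms by (auto simp: Zd_def)
  obtain b where b: "b \<in> car (BB i)" "pr i b = c" using surj_pr[OF c(1)] by blast
  have db: "dB i b \<in> car (BB (Suc i))" using lin_car[OF linB b(1)] .
  have "pr (Suc i) (dB i b) = 0" using chain_pr[OF b(1)] b(2) c(2) by simp
  then obtain a where a: "a \<in> car (BA i)" "al i a = dB i b" using exact_mid[OF db] by blast
  have "al (Suc i) (dA i a) = 0" using chain_al[OF a(1)] a(2) ddB[OF b(1)] by simp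
  then have "dA i a = 0" using inj_al lin_car[OF linA a(1)] by blast
  then have "a \<in> ZA i" using a(1) by (simp add: Zd_def)
  then show ?thesis using b a by blast
qed

lemma lift_unique:
  assumes c: "c \<in> car (BC i)" and c': "c' \<in> cs (IC i) c"
    and a0: "a0 \<in> car (BA i)" "b0 \<in> car (BB i)" "pr i b0 = c" "al i a0 = dB i b0"
    and a: "a \<in> car (BA i)" "b \<in> car (BB i)" "pr i b = c'" "al i a = dB i b"
  shows "a - a0 \<in> IA i"
proof (cases i)
  case 0
  obtain h where h: "h \<in> IC i" "c' = h + c" using c' by (auto simp: cs_def)
  then have "h = 0" using 0 by (simp add: Imd_def)
  then have "pr i (b - b0) = 0" using h a0 a lin_diff[OF linpr a(2) a0(2)] by simp
  then have "b - b0 = 0" using exact0[of "b - b0"] 0 a(2) a0(2) by simp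
  then have "al i a = al i a0" using a(4) a0(4) by simp
  then have "a = a0" using al_injective a(1) a0(1) by blast
  then show ?thesis using zeroA by simp
next
  case (Suc k)
  obtain h where h: "h \<in> IC i" "c' = h + c" using c' by (auto simp: cs_def)
  then obtain y where y: "y \<in> car (BC k)" "h = dC k y" using Suc by (auto simp: Imd_def)
  obtain b' where b': "b' \<in> car (BB k)" "pr k b' = y" using surj_pr[OF y(1)] by blast
  have db': "dB k b' \<in> car (BB (Suc k))" using lin_car[OF linB b'(1)] .
  define z where "z = b - b0 - dB k b'"
  have zc: "z \<in> car (BB (Suc k))" using a(2) a0(2) db' Suc by (simp add: z_def)
  have "pr (Suc k) z = pr (Suc k) b - pr (Suc k) b0 - pr (Suc k) (dB k b')"
    unfolding z_def using lin_diff[OF linpr] a(2) a0(2) db' Suc car_diff by metis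
  also have "\<dots> = 0" using a(3) a0(3) h y b' chain_pr[OF b'(1)] Suc by simp
  finally obtain a'' where a'': "a'' \<in> car (BA k)" "al k a'' = z" using exact_mid[OF zc] by blast
  have "dB (Suc k) z = dB (Suc k) b - dB (Suc k) b0 - dB (Suc k) (dB k b')"
    unfolding z_def using lin_diff[OF linB] a(2) a0(2) db' Suc car_diff by metis
  also have "\<dots> = al (Suc k) a - al (Suc k) a0" using a(4) a0(4) ddB[OF b'(1)] Suc by simp
  also have "\<dots> = al (Suc k) (a - a0)" using lin_diff[OF linal] a(1) a0(1) Suc by metis
  finally have "al (Suc k) (a - a0) = al (Suc k) (dA k a'')" using chain_al[OF a''(1)] a''(2) by simp
  then have "a - a0 = dA k a''"
    using al_injective[of "a - a0" "Suc k" "dA k a''"] a(1) a0(1) lin_car[OF linA a''(1)] Suc by simp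
  then show ?thesis using Suc a''(1) by (simp add: Imd_def)
qed

lemma gamma_cs:
  assumes c: "c \<in> car (BC i)" and a0: "a0 \<in> car (BA i)" "b0 \<in> car (BB i)" "pr i b0 = c" "al i a0 = dB i b0"
  shows "gamma i (cs (IC i) c) = cs (IA i) a0"
proof
  show "gamma i (cs (IC i) c) \<subseteq> cs (IA i) a0"
  proof
    fix x assume "x \<in> gamma i (cs (IC i) c)"
    then obtain c' a b where ab: "c' \<in> cs (IC i) c" "a \<in> car (BA i)" "b \<in> car (BB i)" "pr i b = c'"
      "al i a = dB i b" "x \<in> cs (IA i) a" unfolding gamma_def by blast
    have "a - a0 \<in> IA i" using lift_unique[OF c ab(1) a0 ab(2-5)] .
    then have "cs (IA i) a = cs (IA i) a0" using cs_eq[OF sA] by blast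
    then show "x \<in> cs (IA i) a0" using ab(6) by simp
  qed
next
  have "c \<in> cs (IC i) c" by (rule cs_mem[OF sC])
  then show "cs (IA i) a0 \<subseteq> gamma i (cs (IC i) c)" unfolding gamma_def using a0 by blast
qed


lemma Zd_add: "lin (B i) (B (Suc i)) (d i) \<Longrightarrow> a \<in> Zd B d i \<Longrightarrow> a' \<in> Zd B d i \<Longrightarrow> a + a' \<in> Zd B d i"
  unfolding Zd_def using lin_add[of "B i" "B (Suc i)" "d i" a a'] by auto

lemma kernel_coh: "kernel (coh B1 d1 i1) (coh B2 d2 i2) F = {X \<in> carrier (coh B1 d1 i1). F X = Imd B2 d2 i2}"
  by (simp add: kernel_def coh_one)

lemma hom_coh:
  assumes s1: "sgrp (Imd B1 d1 i1)" and s2: "sgrp (Imd B2 d2 i2)"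
    and l1: "lin (B1 i1) (B1 (Suc i1)) (d1 i1)"
    and m: "\<And>a. a \<in> Zd B1 d1 i1 \<Longrightarrow> \<exists>y\<in>Zd B2 d2 i2. F (cs (Imd B1 d1 i1) a) = cs (Imd B2 d2 i2) y"
    and h: "\<And>a a' y y'. a \<in> Zd B1 d1 i1 \<Longrightarrow> a' \<in> Zd B1 d1 i1 \<Longrightarrow>
        F (cs (Imd B1 d1 i1) a) = cs (Imd B2 d2 i2) y \<Longrightarrow> F (cs (Imd B1 d1 i1) a') = cs (Imd B2 d2 i2) y' \<Longrightarrow>
        F (cs (Imd B1 d1 i1) (a + a')) = cs (Imd B2 d2 i2) (y + y')"
  shows "F \<in> hom (coh B1 d1 i1) (coh B2 d2 i2)"
  unfolding hom_def
proof (intro CollectI conjI ballI)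
  show "F \<in> carrier (coh B1 d1 i1) \<rightarrow> carrier (coh B2 d2 i2)"
    using m unfolding coh_carrier by blast
  fix X Y assume X: "X \<in> carrier (coh B1 d1 i1)" and Y: "Y \<in> carrier (coh B1 d1 i1)"
  obtain a where a: "a \<in> Zd B1 d1 i1" "X = cs (Imd B1 d1 i1) a" using X unfolding coh_carrier by blast
  obtain a' where a': "a' \<in> Zd B1 d1 i1" "Y = cs (Imd B1 d1 i1) a'" using Y unfolding coh_carrier by blast
  obtain y where y: "F X = cs (Imd B2 d2 i2) y" using m a by blast
  obtain y' where y': "F Y = cs (Imd B2 d2 i2) y'" using m a' by blast
  have "X \<otimes>\<^bsub>coh B1 d1 i1\<^esub> Y = cs (Imd B1 d1 i1) (a + a')"
    unfolding coh_mult a a' by (rule cs_mult[OF s1])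
  then have "F (X \<otimes>\<^bsub>coh B1 d1 i1\<^esub> Y) = cs (Imd B2 d2 i2) (y + y')"
    using h[OF a(1) a'(1)] y y' a a' by simp
  also have "\<dots> = F X \<otimes>\<^bsub>coh B2 d2 i2\<^esub> F Y"
    unfolding coh_mult y y' by (rule cs_mult[OF s2, symmetric])
  finally show "F (X \<otimes>\<^bsub>coh B1 d1 i1\<^esub> Y) = F X \<otimes>\<^bsub>coh B2 d2 i2\<^esub> F Y" .
qed


lemma pr_Z: assumes "b \<in> ZB i" shows "pr i b \<in> ZC i"
proof -
  have b: "b \<in> car (BB i)" "dB i b = 0" using assms by (auto simp: Zd_def)
  have "dC i (pr i b) = pr (Suc i) (dB i b)" using chain_pr[OF b(1)] by simp
  also have "\<dots> = 0" using b(2) lin_zero[OF linpr] by simp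
  finally show ?thesis using lin_car[OF linpr b(1)] by (simp add: Zd_def)
qed

lemma al_Z: assumes "a \<in> ZA i" shows "al i a \<in> ZB (Suc i)"
proof -
  have a: "a \<in> car (BA i)" "dA i a = 0" using assms by (auto simp: Zd_def)
  have "dB (Suc i) (al i a) = al (Suc i) (dA i a)" using chain_al[OF a(1)] by simp
  also have "\<dots> = 0" using a(2) lin_zero[OF linal] by simp
  finally show ?thesis using lin_car[OF linal a(1)] by (simp add: Zd_def)
qed

lemma ZA_car: "a \<in> ZA i \<Longrightarrow> a \<in> car (BA i)" by (simp add: Zd_def)
lemma ZB_car: "a \<in> ZB i \<Longrightarrow> a \<in> car (BB i)" by (simp add: Zd_def)
lemma ZC_car: "a \<in> ZC i \<Longrightarrow> a \<in> car (BC i)" by (simp add: Zd_def)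

lemma beta_hom: "beta i \<in> hom (coh BB dB i) (coh BC dC i)"
proof (rule hom_coh[OF sB sC linB])
  fix a assume "a \<in> ZB i"
  then show "\<exists>y\<in>ZC i. beta i (cs (IB i) a) = cs (IC i) y"
    using beta_cs ZB_car pr_Z by blast
next
  fix a a' y y' assume a: "a \<in> ZB i" "a' \<in> ZB i" "beta i (cs (IB i) a) = cs (IC i) y"
    "beta i (cs (IB i) a') = cs (IC i) y'"
  have "cs (IC i) y = cs (IC i) (pr i a)" "cs (IC i) y' = cs (IC i) (pr i a')"
    using a beta_cs ZB_car by auto
  then have "y - pr i a \<in> IC i" "y' - pr i a' \<in> IC i" using cs_eq[OF sC] by blast+
  then have "(y - pr i a) + (y' - pr i a') \<in> IC i" using sC unfolding sgrp_def by blast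
  moreover have "pr i (a + a') = pr i a + pr i a'" using lin_add[OF linpr] a ZB_car by blast
  ultimately have "(y + y') - pr i (a + a') \<in> IC i" by (simp add: algebra_simps)
  then have "cs (IC i) (pr i (a + a')) = cs (IC i) (y + y')" using cs_eq[OF sC] by blast
  moreover have "a + a' \<in> car (BB i)" using a(1,2) ZB_car car_add by blast
  ultimately show "beta i (cs (IB i) (a + a')) = cs (IC i) (y + y')"
    using beta_cs by simp
qed

lemma delta_hom: "delta i \<in> hom (coh BA dA i) (coh BB dB (Suc i))"
proof (rule hom_coh[OF sA sB linA])
  fix a assume "a \<in> ZA i"
  then show "\<exists>y\<in>ZB (Suc i). delta i (cs (IA i) a) = cs (IB (Suc i)) y"
    using delta_cs ZA_car al_Z by blast
next
  fix a a' y y' assume a: "a \<in> ZA i" "a' \<in> ZA i" "delta i (cs (IA i) a) = cs (IB (Suc i)) y"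
    "delta i (cs (IA i) a') = cs (IB (Suc i)) y'"
  have "cs (IB (Suc i)) y = cs (IB (Suc i)) (al i a)" "cs (IB (Suc i)) y' = cs (IB (Suc i)) (al i a')"
    using a delta_cs ZA_car by auto
  then have "y - al i a \<in> IB (Suc i)" "y' - al i a' \<in> IB (Suc i)" using cs_eq[OF sB] by blast+
  then have "(y - al i a) + (y' - al i a') \<in> IB (Suc i)" using sB unfolding sgrp_def by blast
  moreover have "al i (a + a') = al i a + al i a'" using lin_add[OF linal] a ZA_car by blast
  ultimately have "(y + y') - al i (a + a') \<in> IB (Suc i)" by (simp add: algebra_simps)
  then have "cs (IB (Suc i)) (al i (a + a')) = cs (IB (Suc i)) (y + y')" using cs_eq[OF sB] by blast
  moreover have "a + a' \<in> car (BA i)" using a(1,2) ZA_car car_add by blast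
  ultimately show "delta i (cs (IA i) (a + a')) = cs (IB (Suc i)) (y + y')"
    using delta_cs by simp
qed

lemma gamma_hom: "gamma i \<in> hom (coh BC dC i) (coh BA dA i)"
proof (rule hom_coh[OF sC sA linC])
  fix c assume c: "c \<in> ZC i"
  obtain a b where ab: "a \<in> ZA i" "b \<in> car (BB i)" "pr i b = c" "al i a = dB i b" using lift[OF c] by blast
  then show "\<exists>y\<in>ZA i. gamma i (cs (IC i) c) = cs (IA i) y"
    using gamma_cs[OF ZC_car[OF c] ZA_car[OF ab(1)] ab(2-4)] by blast
next
  fix c c' y y' assume c: "c \<in> ZC i" "c' \<in> ZC i" "gamma i (cs (IC i) c) = cs (IA i) y"
    "gamma i (cs (IC i) c') = cs (IA i) y'"
  obtain a b where ab: "a \<in> ZA i" "b \<in> car (BB i)" "pr i b = c" "al i a = dB i b" using lift[OF c(1)] by blast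
  obtain a' b' where ab': "a' \<in> ZA i" "b' \<in> car (BB i)" "pr i b' = c'" "al i a' = dB i b'" using lift[OF c(2)] by blast
  have "cs (IA i) y = cs (IA i) a" "cs (IA i) y' = cs (IA i) a'"
    using gamma_cs[OF ZC_car[OF c(1)] ZA_car[OF ab(1)] ab(2-4)]
      gamma_cs[OF ZC_car[OF c(2)] ZA_car[OF ab'(1)] ab'(2-4)] c by auto
  then have "y - a \<in> IA i" "y' - a' \<in> IA i" using cs_eq[OF sA] by blast+
  then have "(y - a) + (y' - a') \<in> IA i" using sA unfolding sgrp_def by blast
  then have "(y + y') - (a + a') \<in> IA i" by (simp add: algebra_simps)
  then have e: "cs (IA i) (a + a') = cs (IA i) (y + y')" using cs_eq[OF sA] by blast
  have "pr i (b + b') = c + c'" using lin_add[OF linpr ab(2) ab'(2)] ab ab' by simp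
  moreover have "al i (a + a') = dB i (b + b')"
    using lin_add[OF linpr ab(2) ab'(2)] lin_add[OF linal ZA_car[OF ab(1)] ZA_car[OF ab'(1)]]
      lin_add[OF linB ab(2) ab'(2)] ab ab' by simp
  ultimately have "gamma i (cs (IC i) (c + c')) = cs (IA i) (a + a')"
    using gamma_cs[of "c + c'" i "a + a'" "b + b'"] ZC_car c ZA_car ab ab' by simp
  then show "gamma i (cs (IC i) (c + c')) = cs (IA i) (y + y')" using e by simp
qed

lemma zB_in: "0 \<in> ZB i" unfolding Zd_def using lin_zero[OF linB] by simp

lemma ker_beta0: "kernel (coh BB dB 0) (coh BC dC 0) (beta 0) = {\<one>\<^bsub>coh BB dB 0\<^esub>}"
proof -
  have "X = IB 0" if X: "X \<in> carrier (coh BB dB 0)" "beta 0 X = IC 0" for X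
  proof -
    obtain b where b: "b \<in> ZB 0" "X = cs (IB 0) b" using X unfolding coh_carrier by blast
    have "cs (IC 0) (pr 0 b) = IC 0" using X b beta_cs ZB_car by simp
    then have "pr 0 b \<in> IC 0" using cs_self[OF sC] by blast
    then have "pr 0 b = 0" by (simp add: Imd_def)
    then have "b = 0" using exact0 ZB_car b by blast
    then show "X = IB 0" using b cs_zero by simp
  qed
  moreover have "IB 0 \<in> carrier (coh BB dB 0)"
    unfolding coh_carrier using zB_in image_eqI[of "IB 0" "cs (IB 0)" 0] by (simp add: cs_zero)
  moreover have "beta 0 (IB 0) = IC 0"
    using beta_cs[OF car_zero, of 0] by (simp add: cs_zero lin_zero[OF linpr])
  ultimately show ?thesis unfolding kernel_coh coh_one by blast
qed

lemma ker_beta: "kernel (coh BB dB (Suc i)) (coh BC dC (Suc i)) (beta (Suc i)) = delta i ` carrier (coh BA dA i)"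
proof
  show "kernel (coh BB dB (Suc i)) (coh BC dC (Suc i)) (beta (Suc i)) \<subseteq> delta i ` carrier (coh BA dA i)"
  proof
    fix X assume "X \<in> kernel (coh BB dB (Suc i)) (coh BC dC (Suc i)) (beta (Suc i))"
    then have X: "X \<in> carrier (coh BB dB (Suc i))" "beta (Suc i) X = IC (Suc i)" unfolding kernel_coh by auto
    obtain b where b: "b \<in> ZB (Suc i)" "X = cs (IB (Suc i)) b" using X unfolding coh_carrier by blast
    have bc: "b \<in> car (BB (Suc i))" using ZB_car[OF b(1)] .
    have "cs (IC (Suc i)) (pr (Suc i) b) = IC (Suc i)" using X b beta_cs bc by simp
    then have "pr (Suc i) b \<in> IC (Suc i)" using cs_self[OF sC] by blast
    then obtain y where y: "y \<in> car (BC i)" "pr (Suc i) b = dC i y" by (auto simp: Imd_def)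
    obtain b' where b': "b' \<in> car (BB i)" "pr i b' = y" using surj_pr[OF y(1)] by blast
    have db': "dB i b' \<in> car (BB (Suc i))" using lin_car[OF linB b'(1)] .
    define z where "z = b - dB i b'"
    have zc: "z \<in> car (BB (Suc i))" unfolding z_def using bc db' by simp
    have "pr (Suc i) z = 0" unfolding z_def using lin_diff[OF linpr bc db'] y b' chain_pr[OF b'(1)] by simp
    then obtain a where a: "a \<in> car (BA i)" "al i a = z" using exact_mid[OF zc] by blast
    have "dB (Suc i) z = 0" unfolding z_def using lin_diff[OF linB bc db'] b(1) ddB[OF b'(1)]
      by (simp add: Zd_def)
    then have "al (Suc i) (dA i a) = 0" using chain_al[OF a(1)] a(2) by simp
    then have "dA i a = 0" using inj_al lin_car[OF linA a(1)] by blast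
    then have aZ: "a \<in> ZA i" using a(1) by (simp add: Zd_def)
    have "dB i b' \<in> IB (Suc i)" using b'(1) by (simp add: Imd_def)
    moreover have "z - b = - dB i b'" unfolding z_def by simp
    ultimately have "z - b \<in> IB (Suc i)" using sB unfolding sgrp_def by simp
    then have "cs (IB (Suc i)) z = cs (IB (Suc i)) b" using cs_eq[OF sB] by blast
    then have "delta i (cs (IA i) a) = X" using delta_cs[OF a(1)] a(2) b(2) by simp
    moreover have "cs (IA i) a \<in> carrier (coh BA dA i)" unfolding coh_carrier using aZ by blast
    ultimately show "X \<in> delta i ` carrier (coh BA dA i)" by blast
  qed
next
  show "delta i ` carrier (coh BA dA i) \<subseteq> kernel (coh BB dB (Suc i)) (coh BC dC (Suc i)) (beta (Suc i))"
  proof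
    fix X assume "X \<in> delta i ` carrier (coh BA dA i)"
    then obtain a where a: "a \<in> ZA i" "X = delta i (cs (IA i) a)" unfolding coh_carrier by blast
    have X: "X = cs (IB (Suc i)) (al i a)" using a delta_cs ZA_car by simp
    have "X \<in> carrier (coh BB dB (Suc i))" unfolding coh_carrier X using al_Z[OF a(1)] by blast
    moreover have "beta (Suc i) X = IC (Suc i)"
      unfolding X using beta_cs lin_car[OF linal ZA_car[OF a(1)]] pr_al[OF ZA_car[OF a(1)]] cs_zero by simp
    ultimately show "X \<in> kernel (coh BB dB (Suc i)) (coh BC dC (Suc i)) (beta (Suc i))"
      unfolding kernel_coh by blast
  qed
qed

lemma ker_gamma: "kernel (coh BC dC i) (coh BA dA i) (gamma i) = beta i ` carrier (coh BB dB i)"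
proof
  show "kernel (coh BC dC i) (coh BA dA i) (gamma i) \<subseteq> beta i ` carrier (coh BB dB i)"
  proof
    fix X assume "X \<in> kernel (coh BC dC i) (coh BA dA i) (gamma i)"
    then have X: "X \<in> carrier (coh BC dC i)" "gamma i X = IA i" unfolding kernel_coh by auto
    obtain c where c: "c \<in> ZC i" "X = cs (IC i) c" using X unfolding coh_carrier by blast
    obtain a0 b0 where ab: "a0 \<in> ZA i" "b0 \<in> car (BB i)" "pr i b0 = c" "al i a0 = dB i b0"
      using lift[OF c(1)] by blast
    have "cs (IA i) a0 = IA i" using gamma_cs[OF ZC_car[OF c(1)] ZA_car[OF ab(1)] ab(2-4)] X c by simp
    then have a0I: "a0 \<in> IA i" using cs_self[OF sA] by blast
    have "\<exists>b1. b1 \<in> ZB i \<and> pr i b1 = c"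
    proof (cases i)
      case 0
      then have "a0 = 0" using a0I by (simp add: Imd_def)
      then have "dB i b0 = 0" using ab(4) lin_zero[OF linal] by simp
      then show ?thesis using ab by (auto simp: Zd_def)
    next
      case (Suc k)
      then obtain a' where a': "a' \<in> car (BA k)" "a0 = dA k a'" using a0I by (auto simp: Imd_def)
      define b1 where "b1 = b0 - al k a'"
      have alc: "al k a' \<in> car (BB i)" using lin_car[OF linal a'(1)] Suc by simp
      have b1c: "b1 \<in> car (BB i)" unfolding b1_def using ab(2) alc by simp
      have "pr i b1 = c" unfolding b1_def using lin_diff[OF linpr ab(2) alc] ab(3) pr_al[OF a'(1)] Suc by simp
      moreover have "dB i b1 = 0" unfolding b1_def using lin_diff[OF linB ab(2) alc] ab(4) a'
          chain_al[OF a'(1)] Suc by simp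
      ultimately show ?thesis using b1c by (auto simp: Zd_def)
    qed
    then obtain b1 where b1: "b1 \<in> ZB i" "pr i b1 = c" by blast
    have "beta i (cs (IB i) b1) = X" using beta_cs ZB_car[OF b1(1)] b1(2) c(2) by simp
    moreover have "cs (IB i) b1 \<in> carrier (coh BB dB i)" unfolding coh_carrier using b1 by blast
    ultimately show "X \<in> beta i ` carrier (coh BB dB i)" by blast
  qed
next
  show "beta i ` carrier (coh BB dB i) \<subseteq> kernel (coh BC dC i) (coh BA dA i) (gamma i)"
  proof
    fix X assume "X \<in> beta i ` carrier (coh BB dB i)"
    then obtain b where b: "b \<in> ZB i" "X = beta i (cs (IB i) b)" unfolding coh_carrier by blast
    have X: "X = cs (IC i) (pr i b)" using b beta_cs ZB_car by simp
    have "X \<in> carrier (coh BC dC i)" unfolding coh_carrier X using pr_Z[OF b(1)] by blast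
    moreover have "gamma i X = IA i"
    proof -
      have "al i 0 = dB i b" using lin_zero[OF linal] b(1) by (simp add: Zd_def)
      then have "gamma i X = cs (IA i) 0" unfolding X
        by (rule gamma_cs[OF ZC_car[OF pr_Z[OF b(1)]] car_zero ZB_car[OF b(1)] refl])
      then show ?thesis by (simp add: cs_zero)
    qed
    ultimately show "X \<in> kernel (coh BC dC i) (coh BA dA i) (gamma i)" unfolding kernel_coh by blast
  qed
qed

lemma ker_delta: "kernel (coh BA dA i) (coh BB dB (Suc i)) (delta i) = gamma i ` carrier (coh BC dC i)"
proof
  show "kernel (coh BA dA i) (coh BB dB (Suc i)) (delta i) \<subseteq> gamma i ` carrier (coh BC dC i)"
  proof
    fix X assume "X \<in> kernel (coh BA dA i) (coh BB dB (Suc i)) (delta i)"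
    then have X: "X \<in> carrier (coh BA dA i)" "delta i X = IB (Suc i)" unfolding kernel_coh by auto
    obtain a where a: "a \<in> ZA i" "X = cs (IA i) a" using X unfolding coh_carrier by blast
    have "cs (IB (Suc i)) (al i a) = IB (Suc i)" using delta_cs ZA_car[OF a(1)] X a by simp
    then have "al i a \<in> IB (Suc i)" using cs_self[OF sB] by blast
    then obtain b where b: "b \<in> car (BB i)" "al i a = dB i b" by (auto simp: Imd_def)
    have "dC i (pr i b) = 0" using chain_pr[OF b(1)] b(2) pr_al[OF ZA_car[OF a(1)]] by simp
    then have cZ: "pr i b \<in> ZC i" using lin_car[OF linpr b(1)] by (simp add: Zd_def)
    have "gamma i (cs (IC i) (pr i b)) = X"
      using gamma_cs[OF ZC_car[OF cZ] ZA_car[OF a(1)] b(1) refl b(2)] a(2) by simp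
    moreover have "cs (IC i) (pr i b) \<in> carrier (coh BC dC i)" unfolding coh_carrier using cZ by blast
    ultimately show "X \<in> gamma i ` carrier (coh BC dC i)" by blast
  qed
next
  show "gamma i ` carrier (coh BC dC i) \<subseteq> kernel (coh BA dA i) (coh BB dB (Suc i)) (delta i)"
  proof
    fix X assume "X \<in> gamma i ` carrier (coh BC dC i)"
    then obtain c where c: "c \<in> ZC i" "X = gamma i (cs (IC i) c)" unfolding coh_carrier by blast
    obtain a0 b0 where ab: "a0 \<in> ZA i" "b0 \<in> car (BB i)" "pr i b0 = c" "al i a0 = dB i b0"
      using lift[OF c(1)] by blast
    have X: "X = cs (IA i) a0" using gamma_cs[OF ZC_car[OF c(1)] ZA_car[OF ab(1)] ab(2-4)] c by simp
    have "X \<in> carrier (coh BA dA i)" unfolding coh_carrier X using ab(1) by blast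
    moreover have "delta i X = IB (Suc i)"
    proof -
      have "dB i b0 \<in> IB (Suc i)" using ab(2) by (simp add: Imd_def)
      then show ?thesis unfolding X using delta_cs[OF ZA_car[OF ab(1)]] ab(4) cs_self[OF sB] by simp
    qed
    ultimately show "X \<in> kernel (coh BA dA i) (coh BB dB (Suc i)) (delta i)" unfolding kernel_coh by blast
  qed
qed

theorem les:
  "\<exists>\<beta> \<gamma> \<delta>.
     (\<forall>i. \<beta> i \<in> hom (coh BB dB i) (coh BC dC i)) \<and>
     (\<forall>i. \<gamma> i \<in> hom (coh BC dC i) (coh BA dA i)) \<and>
     (\<forall>i. \<delta> i \<in> hom (coh BA dA i) (coh BB dB (Suc i))) \<and>
     kernel (coh BB dB 0) (coh BC dC 0) (\<beta> 0) = {\<one>\<^bsub>coh BB dB 0\<^esub>} \<and>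
     (\<forall>i. kernel (coh BB dB (Suc i)) (coh BC dC (Suc i)) (\<beta> (Suc i)) = \<delta> i ` carrier (coh BA dA i)) \<and>
     (\<forall>i. kernel (coh BC dC i) (coh BA dA i) (\<gamma> i) = \<beta> i ` carrier (coh BB dB i)) \<and>
     (\<forall>i. kernel (coh BA dA i) (coh BB dB (Suc i)) (\<delta> i) = \<gamma> i ` carrier (coh BC dC i))"
  using beta_hom gamma_hom delta_hom ker_beta0 ker_beta ker_gamma ker_delta by blast

end


section \<open>Components\<close>

lemma adj_sym: "(x, y) \<in> adj G s \<Longrightarrow> (y, x) \<in> adj G s"
  unfolding adj_def by blast

lemma adj_mono: "s \<subseteq> t \<Longrightarrow> adj G s \<subseteq> adj G t"
  unfolding adj_def by blast

lemma conn_equiv: "equiv (verts G) (conn_rel G s)"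
proof (rule equivI)
  show "refl_on (verts G) (conn_rel G s)" unfolding refl_on_def conn_rel_def by auto
  show "conn_rel G s \<subseteq> verts G \<times> verts G" unfolding conn_rel_def by auto
  have "sym (adj G s)" by (rule symI) (rule adj_sym)
  then have S: "sym ((adj G s)\<^sup>*)" by (rule sym_rtrancl)
  show "sym (conn_rel G s)"
  proof (rule symI)
    fix x y assume "(x, y) \<in> conn_rel G s"
    then have "x \<in> verts G" "y \<in> verts G" "(x, y) \<in> (adj G s)\<^sup>*" unfolding conn_rel_def by auto
    moreover have "(y, x) \<in> (adj G s)\<^sup>*" using symD[OF S] calculation(3) .
    ultimately show "(y, x) \<in> conn_rel G s" unfolding conn_rel_def by simp
  qed
  show "trans (conn_rel G s)"
  proof (rule transI)
    fix x y z assume "(x, y) \<in> conn_rel G s" "(y, z) \<in> conn_rel G s"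
    then have "x \<in> verts G" "z \<in> verts G" "(x, y) \<in> (adj G s)\<^sup>*" "(y, z) \<in> (adj G s)\<^sup>*"
      unfolding conn_rel_def by auto
    then show "(x, z) \<in> conn_rel G s" unfolding conn_rel_def using rtrancl_trans[of x y "adj G s" z] by simp
  qed
qed

lemma conn_mono: "s \<subseteq> t \<Longrightarrow> conn_rel G s \<subseteq> conn_rel G t"
  unfolding conn_rel_def using rtrancl_mono[OF adj_mono] by blast

lemma comps_finite: "finite (verts G) \<Longrightarrow> finite (comps G s)"
  unfolding comps_def by (rule finite_quotient) (auto simp: conn_rel_def)

lemma comps_ne: "X \<in> comps G s \<Longrightarrow> X \<noteq> {}"
  unfolding comps_def by (rule in_quotient_imp_non_empty[OF conn_equiv])

lemma comps_sub: "X \<in> comps G s \<Longrightarrow> X \<subseteq> verts G"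
  unfolding comps_def by (rule in_quotient_imp_subset[OF conn_equiv])

lemma comps_disj: "X \<in> comps G s \<Longrightarrow> Y \<in> comps G s \<Longrightarrow> X = Y \<or> X \<inter> Y = {}"
  unfolding comps_def by (rule quotient_disj[OF conn_equiv])

lemma comps_eq_class: "X \<in> comps G s \<Longrightarrow> x \<in> X \<Longrightarrow> X = conn_rel G s `` {x}"
  unfolding comps_def
  by (metis Image_singleton_iff conn_equiv equiv_class_eq_iff quotientE)

lemma class_in_comps: "x \<in> verts G \<Longrightarrow> conn_rel G s `` {x} \<in> comps G s"
  unfolding comps_def by (rule quotientI)

lemma overlap_sub:
  assumes "s \<subseteq> t" "Y \<in> comps G s" "Z \<in> comps G t" "Y \<inter> Z \<noteq> {}"
  shows "Y \<subseteq> Z"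
proof -
  obtain w where w: "w \<in> Y" "w \<in> Z" using assms(4) by blast
  have Y: "Y = conn_rel G s `` {w}" using comps_eq_class[OF assms(2) w(1)] .
  have Z: "Z = conn_rel G t `` {w}" using comps_eq_class[OF assms(3) w(2)] .
  show ?thesis unfolding Y Z using conn_mono[OF assms(1)] by blast
qed

lemma sub_class:
  assumes "s \<subseteq> t" "X \<in> comps G s"
  shows "\<exists>Z\<in>comps G t. X \<subseteq> Z"
proof -
  obtain x where x: "x \<in> X" using comps_ne[OF assms(2)] by blast
  have xv: "x \<in> verts G" using comps_sub[OF assms(2)] x by blast
  have "conn_rel G t `` {x} \<in> comps G t" by (rule class_in_comps[OF xv])
  moreover have "x \<in> conn_rel G t `` {x}" using xv by (simp add: conn_rel_def)
  ultimately show ?thesis using overlap_sub[OF assms] x by blast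
qed

lemma class_unique:
  assumes "X \<in> comps G s" "Z \<in> comps G t" "Z' \<in> comps G t" "X \<subseteq> Z" "X \<subseteq> Z'"
  shows "Z = Z'"
  using comps_ne[OF assms(1)] comps_disj[OF assms(2,3)] assms(4,5) by blast

section \<open>Labels\<close>

definition lab :: "('v, 'e) sgraph \<Rightarrow> 'e set \<Rightarrow> ('v set \<Rightarrow> bool) \<Rightarrow> 'e set \<Rightarrow> 'v set \<Rightarrow> bool" where
  "lab G s c t = (\<lambda>Z. Z \<in> comps G t \<and> (\<exists>X\<in>comps G s. X \<subseteq> Z \<and> c X))"

definition vn :: "('v, 'e) sgraph \<Rightarrow> 'e set \<Rightarrow> ('v set \<Rightarrow> bool) \<Rightarrow> 'e set \<Rightarrow> bool" where
  "vn G s c t \<longleftrightarrow> (\<exists>Z\<in>comps G t. card {X \<in> comps G s. X \<subseteq> Z \<and> c X} \<ge> 2)"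

lemma ext_label_lab: "ext_label G s c e' = lab G s c (insert e' s)"
  by (simp add: ext_label_def lab_def)

lemma ext_vanishes_vn: "ext_vanishes G s c e' = vn G s c (insert e' s)"
  by (simp add: ext_vanishes_def vn_def)

lemma card_ge2: "finite A \<Longrightarrow> (2 \<le> card A) = (\<exists>x\<in>A. \<exists>y\<in>A. x \<noteq> y)"
proof
  assume f: "finite A" and c: "2 \<le> card A"
  then obtain x where x: "x \<in> A" by fastforce
  have "card (A - {x}) \<ge> 1" using c x f by (simp add: card_Diff_singleton)
  then have "A - {x} \<noteq> {}" by (metis card.empty not_one_le_zero)
  then obtain y where "y \<in> A - {x}" by blast
  then show "\<exists>x\<in>A. \<exists>y\<in>A. x \<noteq> y" using x by blast
next
  assume f: "finite A" and "\<exists>x\<in>A. \<exists>y\<in>A. x \<noteq> y"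
  then obtain x y where "x \<in> A" "y \<in> A" "x \<noteq> y" by blast
  then have "card {x, y} \<le> card A" using f by (intro card_mono) auto
  then show "2 \<le> card A" using \<open>x \<noteq> y\<close> by simp
qed

lemma vn_iff:
  assumes "finite (verts G)"
  shows "vn G s c t \<longleftrightarrow> (\<exists>Z\<in>comps G t. \<exists>X1 X2. X1 \<in> comps G s \<and> X2 \<in> comps G s \<and> X1 \<noteq> X2 \<and>
      X1 \<subseteq> Z \<and> X2 \<subseteq> Z \<and> c X1 \<and> c X2)"
proof -
  have "finite {X \<in> comps G s. X \<subseteq> Z \<and> c X}" for Z using comps_finite[OF assms] by simp
  then have "(2 \<le> card {X \<in> comps G s. X \<subseteq> Z \<and> c X}) = (\<exists>X1 X2. X1 \<in> comps G s \<and> X2 \<in> comps G s \<and> X1 \<noteq> X2 \<and>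
      X1 \<subseteq> Z \<and> X2 \<subseteq> Z \<and> c X1 \<and> c X2)" for Z
    using card_ge2[of "{X \<in> comps G s. X \<subseteq> Z \<and> c X}"] by auto
  then show ?thesis unfolding vn_def by simp
qed

lemma vnI: "finite (verts G) \<Longrightarrow> Z \<in> comps G t \<Longrightarrow> X1 \<in> comps G s \<Longrightarrow> X2 \<in> comps G s \<Longrightarrow> X1 \<noteq> X2 \<Longrightarrow>
   X1 \<subseteq> Z \<Longrightarrow> X2 \<subseteq> Z \<Longrightarrow> c X1 \<Longrightarrow> c X2 \<Longrightarrow> vn G s c t"
  unfolding vn_iff by blast

lemma vnE: assumes "finite (verts G)" "vn G s c t"
  obtains Z X1 X2 where "Z \<in> comps G t" "X1 \<in> comps G s" "X2 \<in> comps G s" "X1 \<noteq> X2"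
   "X1 \<subseteq> Z" "X2 \<subseteq> Z" "c X1" "c X2"
  using assms unfolding vn_iff[OF assms(1)] by blast

lemma lab_comp:
  assumes "s \<subseteq> t" "t \<subseteq> u"
  shows "lab G t (lab G s c t) u = lab G s c u"
proof (rule ext)
  fix Z
  show "lab G t (lab G s c t) u Z = lab G s c u Z"
  proof
    assume "lab G t (lab G s c t) u Z"
    then obtain Y X where "Z \<in> comps G u" "Y \<in> comps G t" "Y \<subseteq> Z" "X \<in> comps G s" "X \<subseteq> Y" "c X"
      unfolding lab_def by blast
    then show "lab G s c u Z" unfolding lab_def by blast
  next
    assume "lab G s c u Z"
    then obtain X where X: "Z \<in> comps G u" "X \<in> comps G s" "X \<subseteq> Z" "c X" unfolding lab_def by blast
    obtain Y where Y: "Y \<in> comps G t" "X \<subseteq> Y" using sub_class[OF assms(1) X(2)] by blast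
    have "Y \<inter> Z \<noteq> {}" using Y(2) X(3) comps_ne[OF X(2)] by blast
    then have "Y \<subseteq> Z" using overlap_sub[OF assms(2) Y(1) X(1)] by blast
    then show "lab G t (lab G s c t) u Z" unfolding lab_def using X Y by blast
  qed
qed

lemma vn_comp:
  assumes fin: "finite (verts G)" and st: "s \<subseteq> t" and tu: "t \<subseteq> u"
  shows "(\<not> vn G s c t \<and> \<not> vn G t (lab G s c t) u) \<longleftrightarrow> \<not> vn G s c u"
proof -
  have su: "s \<subseteq> u" using st tu by blast
  have A: "vn G s c u" if hA: "vn G s c t"
  proof -
    obtain Y X1 X2 where h: "Y \<in> comps G t" "X1 \<in> comps G s" "X2 \<in> comps G s" "X1 \<noteq> X2"
      "X1 \<subseteq> Y" "X2 \<subseteq> Y" "c X1" "c X2" using vnE[OF fin hA] by blast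
    obtain Z where Z: "Z \<in> comps G u" "Y \<subseteq> Z" using sub_class[OF tu h(1)] by blast
    show ?thesis using h Z by (intro vnI[OF fin Z(1) h(2,3,4)]) auto
  qed
  have B: "vn G s c u" if hB: "vn G t (lab G s c t) u"
  proof -
    obtain Z Y1 Y2 where h: "Z \<in> comps G u" "Y1 \<in> comps G t" "Y2 \<in> comps G t" "Y1 \<noteq> Y2"
      "Y1 \<subseteq> Z" "Y2 \<subseteq> Z" "lab G s c t Y1" "lab G s c t Y2" using vnE[OF fin hB] by blast
    obtain X1 where X1: "X1 \<in> comps G s" "X1 \<subseteq> Y1" "c X1" using h(7) unfolding lab_def by blast
    obtain X2 where X2: "X2 \<in> comps G s" "X2 \<subseteq> Y2" "c X2" using h(8) unfolding lab_def by blast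
    have "Y1 \<inter> Y2 = {}" using comps_disj[OF h(2,3)] h(4) by blast
    then have "X1 \<noteq> X2" using X1(2) X2(2) comps_ne[OF X1(1)] by blast
    then show ?thesis using h X1 X2 by (intro vnI[OF fin h(1) X1(1) X2(1)]) auto
  qed
  have C: "vn G s c t \<or> vn G t (lab G s c t) u" if hC: "vn G s c u"
  proof -
    obtain Z X1 X2 where h: "Z \<in> comps G u" "X1 \<in> comps G s" "X2 \<in> comps G s" "X1 \<noteq> X2"
      "X1 \<subseteq> Z" "X2 \<subseteq> Z" "c X1" "c X2" using vnE[OF fin hC] by blast
    obtain Y1 where Y1: "Y1 \<in> comps G t" "X1 \<subseteq> Y1" using sub_class[OF st h(2)] by blast
    obtain Y2 where Y2: "Y2 \<in> comps G t" "X2 \<subseteq> Y2" using sub_class[OF st h(3)] by blast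
    have "Y1 \<inter> Z \<noteq> {}" using Y1(2) h(5) comps_ne[OF h(2)] by blast
    then have Y1Z: "Y1 \<subseteq> Z" using overlap_sub[OF tu Y1(1) h(1)] by blast
    have "Y2 \<inter> Z \<noteq> {}" using Y2(2) h(6) comps_ne[OF h(3)] by blast
    then have Y2Z: "Y2 \<subseteq> Z" using overlap_sub[OF tu Y2(1) h(1)] by blast
    show ?thesis
    proof (cases "Y1 = Y2")
      case True
      then have "vn G s c t" using h Y1 Y2 by (intro vnI[OF fin Y1(1) h(2,3,4)]) auto
      then show ?thesis by blast
    next
      case False
      have "lab G s c t Y1" "lab G s c t Y2" unfolding lab_def using Y1 Y2 h by blast+
      then have "vn G t (lab G s c t) u" using Y1Z Y2Z by (intro vnI[OF fin h(1) Y1(1) Y2(1) False])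
      then show ?thesis by blast
    qed
  qed
  show ?thesis using A B C by blast
qed

lemma xdeg_pres:
  assumes fin: "finite (verts G)" and st: "s \<subseteq> t" and nv: "\<not> vn G s c t"
  shows "card {Z \<in> comps G t. lab G s c t Z} = card {X \<in> comps G s. c X}"
proof -
  define g where "g X = conn_rel G t `` X" for X
  have g: "g X \<in> comps G t \<and> X \<subseteq> g X" if X: "X \<in> comps G s" for X
  proof -
    obtain x where x: "x \<in> X" using comps_ne[OF X] by blast
    have xv: "x \<in> verts G" using comps_sub[OF X] x by blast
    have Xe: "X = conn_rel G s `` {x}" by (rule comps_eq_class[OF X x])
    have "g X = conn_rel G t `` {x}"
    proof
      show "conn_rel G t `` {x} \<subseteq> g X" unfolding g_def using x by blast
      show "g X \<subseteq> conn_rel G t `` {x}"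
      proof
        fix y assume "y \<in> g X"
        then obtain x' where "x' \<in> X" "(x', y) \<in> conn_rel G t" unfolding g_def by blast
        moreover have "(x, x') \<in> conn_rel G t" using \<open>x' \<in> X\<close> Xe conn_mono[OF st] by blast
        ultimately show "y \<in> conn_rel G t `` {x}"
          using conn_equiv[of G t] unfolding equiv_def trans_def by blast
      qed
    qed
    moreover have "X \<subseteq> conn_rel G t `` {x}" using Xe conn_mono[OF st] by blast
    ultimately show ?thesis using class_in_comps[OF xv] by simp
  qed
  have eq: "{Z \<in> comps G t. lab G s c t Z} = g ` {X \<in> comps G s. c X}"
  proof
    show "{Z \<in> comps G t. lab G s c t Z} \<subseteq> g ` {X \<in> comps G s. c X}"
    proof
      fix Z assume "Z \<in> {Z \<in> comps G t. lab G s c t Z}"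
      then obtain X where X: "Z \<in> comps G t" "X \<in> comps G s" "X \<subseteq> Z" "c X" unfolding lab_def by blast
      have "g X = Z" using class_unique[OF X(2) _ X(1)] g[OF X(2)] X(3) by blast
      then show "Z \<in> g ` {X \<in> comps G s. c X}" using X by blast
    qed
    show "g ` {X \<in> comps G s. c X} \<subseteq> {Z \<in> comps G t. lab G s c t Z}"
      unfolding lab_def using g by blast
  qed
  have inj: "inj_on g {X \<in> comps G s. c X}"
  proof (rule inj_onI)
    fix X1 X2 assume X1: "X1 \<in> {X \<in> comps G s. c X}" and X2: "X2 \<in> {X \<in> comps G s. c X}" and e: "g X1 = g X2"
    show "X1 = X2"
    proof (rule ccontr)
      assume "X1 \<noteq> X2"
      moreover have "g X1 \<in> comps G t" "X1 \<subseteq> g X1" "X2 \<subseteq> g X1" using g[of X1] g[of X2] X1 X2 e by auto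
      moreover have "X1 \<in> comps G s" "X2 \<in> comps G s" "c X1" "c X2" using X1 X2 by auto
      ultimately have "vn G s c t" using \<open>X1 \<noteq> X2\<close> by (intro vnI[OF fin]) 
      then show False using nv by blast
    qed
  qed
  show ?thesis unfolding eq using card_image[OF inj] .
qed


lemma circuit_mono: "t \<subseteq> s \<Longrightarrow> circuit G t es vs \<Longrightarrow> circuit G s es vs"
  unfolding circuit_def by blast

lemma balanced_mono: "t \<subseteq> s \<Longrightarrow> balanced G s \<Longrightarrow> balanced G t"
  unfolding balanced_def using circuit_mono by blast

lemma bstates_finite:
  assumes wf: "wf_sgraph G"
  shows "finite (bstates G i j)"
proof -
  have fE: "finite (edges G)" and fV: "finite (verts G)" using wf by (auto simp: wf_sgraph_def)
  let ?M = "\<Union>s\<in>Pow (edges G). (\<lambda>C. (s, \<lambda>X. X \<in> C)) ` Pow (comps G s)"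
  have "bstates G i j \<subseteq> ?M"
  proof
    fix S assume "S \<in> bstates G i j"
    then obtain s c where S: "S = (s, c)" "s \<subseteq> edges G" "\<forall>X. X \<notin> comps G s \<longrightarrow> \<not> c X"
      unfolding bstates_def by blast
    have "c = (\<lambda>X. X \<in> {X \<in> comps G s. c X})" using S(3) by auto
    moreover have "{X \<in> comps G s. c X} \<in> Pow (comps G s)" by blast
    ultimately show "S \<in> ?M" using S(1,2) by blast
  qed
  moreover have "finite ?M" using fE comps_finite[OF fV] by auto
  ultimately show ?thesis by (rule finite_subset)
qed

definition sg :: "'e::linorder set \<Rightarrow> 'e \<Rightarrow> int" where
  "sg s e' = (-1) ^ card {f \<in> s. f < e'}"

lemma sg_insert:
  assumes "finite s" "e1 \<notin> s"
  shows "sg (insert e1 s) e2 = (if e1 < e2 then - sg s e2 else sg s e2)"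
proof (cases "e1 < e2")
  case True
  have "{f \<in> insert e1 s. f < e2} = insert e1 {f \<in> s. f < e2}" using True by auto
  moreover have "card (insert e1 {f \<in> s. f < e2}) = Suc (card {f \<in> s. f < e2})"
    using assms by simp
  ultimately show ?thesis using True by (simp add: sg_def)
next
  case False
  have "{f \<in> insert e1 s. f < e2} = {f \<in> s. f < e2}" using False by auto
  then show ?thesis using False by (simp add: sg_def)
qed

lemma sg_antisym:
  assumes "finite s" "e1 \<notin> s" "e2 \<notin> s" "e1 \<noteq> e2"
  shows "sg s e2 * sg (insert e2 s) e1 = - (sg s e1 * sg (insert e1 s) e2)"
  using sg_insert[OF assms(1,2), of e2] sg_insert[OF assms(1,3), of e1] assms(4)
  by (cases "e1 < e2") (auto simp: not_less_iff_gr_or_eq)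

lemma dcoef_alt:
  "dcoef G S T = (\<Sum>e'\<in>edges G - fst S.
      if balanced G (fst T) \<and> \<not> vn G (fst S) (snd S) (insert e' (fst S)) \<and>
         T = (insert e' (fst S), lab G (fst S) (snd S) (insert e' (fst S)))
      then sg (fst S) e' else 0)"
  unfolding dcoef_def ext_label_lab ext_vanishes_vn sg_def
  by (cases "balanced G (fst T)") simp_all

lemma antisym_sum:
  fixes F :: "'a \<Rightarrow> 'a \<Rightarrow> int"
  assumes "finite A" "\<And>e1 e2. e1 \<in> A \<Longrightarrow> e2 \<in> A \<Longrightarrow> e1 \<noteq> e2 \<Longrightarrow> F e2 e1 = - F e1 e2"
  shows "(\<Sum>e1\<in>A. \<Sum>e2\<in>A - {e1}. F e1 e2) = 0"
proof -
  let ?S = "Sigma A (\<lambda>e1. A - {e1})"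
  have fS: "finite ?S" using assms(1) by auto
  have "(\<Sum>e1\<in>A. \<Sum>e2\<in>A - {e1}. F e1 e2) = (\<Sum>(x,y)\<in>?S. F x y)"
    by (rule sum.Sigma) (use assms(1) in auto)
  also have "\<dots> = (\<Sum>p\<in>?S. F (fst p) (snd p))" by (simp add: split_def)
  finally have eq1: "(\<Sum>e1\<in>A. \<Sum>e2\<in>A - {e1}. F e1 e2) = (\<Sum>p\<in>?S. F (fst p) (snd p))" .
  have "(\<Sum>p\<in>?S. F (fst p) (snd p)) = (\<Sum>p\<in>?S. F (snd p) (fst p))"
    by (rule sum.reindex_bij_witness[where i = prod.swap and j = prod.swap]) auto
  also have "\<dots> = (\<Sum>p\<in>?S. - F (fst p) (snd p))"
    by (rule sum.cong) (auto intro: assms(2))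
  also have "\<dots> = - (\<Sum>p\<in>?S. F (fst p) (snd p))" by (simp add: sum_negf)
  finally show ?thesis using eq1 by simp
qed


lemma dd_coef:
  fixes G :: "('v, 'e::linorder) sgraph"
  assumes wf: "wf_sgraph G" and S: "S \<in> bstates G i j"
  shows "(\<Sum>T\<in>bstates G (Suc i) j. dcoef G S T * dcoef G T U) = 0"
proof -
  have fE: "finite (edges G)" and fV: "finite (verts G)" using wf by (auto simp: wf_sgraph_def)
  obtain s c where Sd: "S = (s, c)" by (cases S)
  have sE: "s \<subseteq> edges G" and cs: "card s = i" and bs: "balanced G s"
    and coff: "\<forall>X. X \<notin> comps G s \<longrightarrow> \<not> c X" and xs: "xdeg G (s, c) = j"
    using S unfolding Sd bstates_def by auto
  have fs: "finite s" using sE fE finite_subset by blast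
  let ?B1 = "bstates G (Suc i) j"
  define N where "N e1 = (insert e1 s, lab G s c (insert e1 s))" for e1
  define Q where "Q e1 = (balanced G (insert e1 s) \<and> \<not> vn G s c (insert e1 s))" for e1
  define P where "P e1 e2 = (balanced G (fst U) \<and> \<not> vn G s c (insert e1 (insert e2 s)) \<and>
      U = (insert e1 (insert e2 s), lab G s c (insert e1 (insert e2 s))))" for e1 e2
  define F where "F e1 e2 = (if P e1 e2 then sg s e1 * sg (insert e1 s) e2 else 0)" for e1 e2
  have NB: "N e1 \<in> ?B1" if e1: "e1 \<in> edges G - s" and q: "Q e1" for e1
  proof -
    have "card (insert e1 s) = Suc i" using e1 fs cs by simp
    moreover have "insert e1 s \<subseteq> edges G" using e1 sE by blast
    moreover have "xdeg G (N e1) = j"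
      using xdeg_pres[OF fV, of s "insert e1 s" c] q xs unfolding Q_def N_def xdeg_def by auto
    moreover have "\<forall>X. X \<notin> comps G (insert e1 s) \<longrightarrow> \<not> lab G s c (insert e1 s) X"
      unfolding lab_def by blast
    ultimately show ?thesis using q unfolding N_def Q_def bstates_def by auto
  qed
  have step1: "dcoef G S T = (\<Sum>e1\<in>edges G - s. if T = N e1 \<and> Q e1 then sg s e1 else 0)" for T
    unfolding dcoef_alt Sd fst_conv snd_conv
    by (rule sum.cong) (auto simp: N_def Q_def)
  have "(\<Sum>T\<in>?B1. dcoef G S T * dcoef G T U)
      = (\<Sum>T\<in>?B1. \<Sum>e1\<in>edges G - s. if T = N e1 \<and> Q e1 then sg s e1 * dcoef G T U else 0)"
    unfolding step1 sum_distrib_right by (rule sum.cong) (auto intro: sum.cong)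
  also have "\<dots> = (\<Sum>e1\<in>edges G - s. \<Sum>T\<in>?B1. if T = N e1 \<and> Q e1 then sg s e1 * dcoef G T U else 0)"
    by (rule sum.swap)
  also have "\<dots> = (\<Sum>e1\<in>edges G - s. if Q e1 then sg s e1 * dcoef G (N e1) U else 0)"
  proof (rule sum.cong[OF refl])
    fix e1 assume e1: "e1 \<in> edges G - s"
    show "(\<Sum>T\<in>?B1. if T = N e1 \<and> Q e1 then sg s e1 * dcoef G T U else 0)
        = (if Q e1 then sg s e1 * dcoef G (N e1) U else 0)"
    proof (cases "Q e1")
      case True
      then show ?thesis using sum.delta[OF bstates_finite[OF wf], of "N e1" "\<lambda>T. sg s e1 * dcoef G T U"]
        NB[OF e1 True] by simp
    next
      case False
      then show ?thesis by simp
    qed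
  qed
  also have "\<dots> = (\<Sum>e1\<in>edges G - s. \<Sum>e2\<in>(edges G - s) - {e1}. F e1 e2)"
  proof (rule sum.cong[OF refl])
    fix e1 assume e1: "e1 \<in> edges G - s"
    have E2: "edges G - insert e1 s = (edges G - s) - {e1}" by blast
    have PQ: "Q e1" if "P e1 e2" "e2 \<in> (edges G - s) - {e1}" for e2
    proof -
      have bU: "balanced G (insert e1 (insert e2 s))" and nv: "\<not> vn G s c (insert e1 (insert e2 s))"
        using that unfolding P_def by auto
      have "balanced G (insert e1 s)" by (rule balanced_mono[OF _ bU]) blast
      moreover have "\<not> vn G s c (insert e1 s)"
        using vn_comp[OF fV, of s "insert e1 s" "insert e1 (insert e2 s)" c] nv by blast
      ultimately show ?thesis unfolding Q_def by blast
    qed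
    show "(if Q e1 then sg s e1 * dcoef G (N e1) U else 0) = (\<Sum>e2\<in>(edges G - s) - {e1}. F e1 e2)"
    proof (cases "Q e1")
      case False
      then have "F e1 e2 = 0" if "e2 \<in> (edges G - s) - {e1}" for e2
        using PQ that unfolding F_def by auto
      then show ?thesis using False by simp
    next
      case True
      have "dcoef G (N e1) U = (\<Sum>e2\<in>(edges G - s) - {e1}.
          if balanced G (fst U) \<and> \<not> vn G (insert e1 s) (lab G s c (insert e1 s)) (insert e2 (insert e1 s)) \<and>
             U = (insert e2 (insert e1 s), lab G (insert e1 s) (lab G s c (insert e1 s)) (insert e2 (insert e1 s)))
          then sg (insert e1 s) e2 else 0)"
        unfolding dcoef_alt N_def fst_conv snd_conv E2 ..
      also have "\<dots> = (\<Sum>e2\<in>(edges G - s) - {e1}. if P e1 e2 then sg (insert e1 s) e2 else 0)"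
      proof (rule sum.cong[OF refl])
        fix e2 assume e2: "e2 \<in> (edges G - s) - {e1}"
        have l: "lab G (insert e1 s) (lab G s c (insert e1 s)) (insert e2 (insert e1 s)) = lab G s c (insert e1 (insert e2 s))"
        proof -
          have "s \<subseteq> insert e1 s" "insert e1 s \<subseteq> insert e2 (insert e1 s)" by blast+
          from lab_comp[OF this, of G c] show ?thesis by (simp add: insert_commute)
        qed
        have v: "(\<not> vn G (insert e1 s) (lab G s c (insert e1 s)) (insert e2 (insert e1 s))) = (\<not> vn G s c (insert e1 (insert e2 s)))"
          using vn_comp[OF fV, of s "insert e1 s" "insert e2 (insert e1 s)" c] True unfolding Q_def
          by (auto simp: insert_commute)
        show "(if balanced G (fst U) \<and> \<not> vn G (insert e1 s) (lab G s c (insert e1 s)) (insert e2 (insert e1 s)) \<and>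
             U = (insert e2 (insert e1 s), lab G (insert e1 s) (lab G s c (insert e1 s)) (insert e2 (insert e1 s)))
          then sg (insert e1 s) e2 else 0) = (if P e1 e2 then sg (insert e1 s) e2 else 0)"
          unfolding P_def l v by (simp add: insert_commute)
      qed
      finally have D: "dcoef G (N e1) U = (\<Sum>e2\<in>(edges G - s) - {e1}. if P e1 e2 then sg (insert e1 s) e2 else 0)" .
      have "sg s e1 * dcoef G (N e1) U = (\<Sum>e2\<in>(edges G - s) - {e1}. sg s e1 * (if P e1 e2 then sg (insert e1 s) e2 else 0))"
        unfolding D by (rule sum_distrib_left)
      also have "\<dots> = (\<Sum>e2\<in>(edges G - s) - {e1}. F e1 e2)" unfolding F_def by (rule sum.cong) simp_all
      finally show ?thesis using True by simp
    qed
  qed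
  also have "\<dots> = 0"
  proof (rule antisym_sum)
    show "finite (edges G - s)" using fE by simp
    fix e1 e2 assume e: "e1 \<in> edges G - s" "e2 \<in> edges G - s" "e1 \<noteq> e2"
    have "P e2 e1 = P e1 e2" unfolding P_def by (simp add: insert_commute)
    then show "F e2 e1 = - F e1 e2" unfolding F_def using sg_antisym[OF fs _ _ e(3), of] e by auto
  qed
  finally show ?thesis .
qed

lemma dmap_lin: "lin (bstates G n j) (bstates G (Suc n) j) (dmap G n j)"
  unfolding lin_def car_def dmap_def
  by (auto simp: fun_eq_iff sum.distrib distrib_right)

lemma dmap_sq:
  fixes G :: "('v, 'e::linorder) sgraph"
  assumes wf: "wf_sgraph G" and f: "f \<in> car (bstates G i j)"
  shows "dmap G (Suc i) j (dmap G i j f) = 0"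
proof (rule ext)
  fix U
  show "dmap G (Suc i) j (dmap G i j f) U = 0 U"
  proof (cases "U \<in> bstates G (Suc (Suc i)) j")
    case False then show ?thesis by (simp add: dmap_def)
  next
    case True
    have "dmap G (Suc i) j (dmap G i j f) U
        = (\<Sum>T\<in>bstates G (Suc i) j. (\<Sum>S\<in>bstates G i j. f S * dcoef G S T) * dcoef G T U)"
      using True by (simp add: dmap_def)
    also have "\<dots> = (\<Sum>T\<in>bstates G (Suc i) j. \<Sum>S\<in>bstates G i j. f S * (dcoef G S T * dcoef G T U))"
      by (simp add: sum_distrib_right mult.assoc)
    also have "\<dots> = (\<Sum>S\<in>bstates G i j. \<Sum>T\<in>bstates G (Suc i) j. f S * (dcoef G S T * dcoef G T U))"
      by (rule sum.swap)
    also have "\<dots> = (\<Sum>S\<in>bstates G i j. f S * (\<Sum>T\<in>bstates G (Suc i) j. dcoef G S T * dcoef G T U))"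
      by (simp add: sum_distrib_left)
    also have "\<dots> = 0" using dd_coef[OF wf] by simp
    finally show ?thesis by simp
  qed
qed


fun walk :: "('v, 'e) sgraph \<Rightarrow> 'e set \<Rightarrow> ('v \<times> 'e \<times> 'v) list \<Rightarrow> 'v \<Rightarrow> 'v \<Rightarrow> bool" where
  "walk G s [] u w = (u = w)"
| "walk G s ((x, f, y) # L) u w = (x = u \<and> f \<in> s \<and> (ends G f = (x, y) \<or> ends G f = (y, x)) \<and> walk G s L y w)"

definition wsign :: "('v, 'e) sgraph \<Rightarrow> ('v \<times> 'e \<times> 'v) list \<Rightarrow> int" where
  "wsign G L = prod_list (map (\<lambda>(x, f, y). sgn G f) L)"

lemma wsign_Nil[simp]: "wsign G [] = 1" by (simp add: wsign_def)
lemma wsign_Cons[simp]: "wsign G ((x, f, y) # L) = sgn G f * wsign G L" by (simp add: wsign_def)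
lemma wsign_append: "wsign G (L1 @ L2) = wsign G L1 * wsign G L2" by (simp add: wsign_def)

lemma walk_append: "walk G s (L1 @ L2) u w \<longleftrightarrow> (\<exists>m. walk G s L1 u m \<and> walk G s L2 m w)"
proof (induction L1 arbitrary: u)
  case Nil then show ?case by simp
next
  case (Cons st L1)
  obtain x f y where st: "st = (x, f, y)" by (cases st)
  show ?case unfolding st using Cons.IH by auto
qed

lemma walk_hd: "walk G s L u w \<Longrightarrow> L \<noteq> [] \<Longrightarrow> fst (hd L) = u"
  by (cases L) auto

lemma walk_nth:
  "walk G s L u w \<Longrightarrow> i < length L \<Longrightarrow> L ! i = (x, f, y) \<Longrightarrow>
    f \<in> s \<and> (ends G f = (x, y) \<or> ends G f = (y, x)) \<and> y = (if Suc i < length L then fst (L ! Suc i) else w)"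
proof (induction L arbitrary: u i)
  case Nil then show ?case by simp
next
  case (Cons st L)
  obtain x' f' y' where st: "st = (x', f', y')" by (cases st)
  show ?case
  proof (cases i)
    case 0
    then show ?thesis using Cons.prems st by (cases L) auto
  next
    case (Suc i')
    then show ?thesis using Cons.prems Cons.IH[of y' i'] st by auto
  qed
qed

definition negcw :: "('v, 'e) sgraph \<Rightarrow> 'e set \<Rightarrow> bool" where
  "negcw G s \<longleftrightarrow> (\<exists>L v. L \<noteq> [] \<and> walk G s L v v \<and> wsign G L = -1)"

lemma doubleton_cases: "{p, q} = {x, y} \<Longrightarrow> (p, q) = (x, y) \<or> (p, q) = (y, x)"
  by (auto simp: doubleton_eq_iff)

lemma circuit_walk:
  assumes c: "circuit G s es vs" and neg: "prod_list (map (sgn G) es) = -1"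
  shows "negcw G s"
proof -
  define k where "k = length es"
  have k1: "k \<ge> 1" and lv: "length vs = k" and ses: "set es \<subseteq> s"
    and ed: "\<And>i. i < k \<Longrightarrow> {fst (ends G (es ! i)), snd (ends G (es ! i))} = {vs ! i, vs ! (Suc i mod k)}"
    using c unfolding circuit_def k_def by auto
  define F where "F i = (vs ! i, es ! i, vs ! (Suc i mod k))" for i
  have W: "walk G s (map F [m..<k]) (vs ! m) (vs ! 0)" if "m < k" for m
    using that
  proof (induction "k - m" arbitrary: m)
    case 0 then show ?case by simp
  next
    case (Suc d)
    have step: "es ! m \<in> s \<and> (ends G (es ! m) = (vs ! m, vs ! (Suc m mod k)) \<or> ends G (es ! m) = (vs ! (Suc m mod k), vs ! m))"
    proof -
      have "es ! m \<in> s" using ses Suc.prems k_def by (metis nth_mem subsetD)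
      moreover have "(fst (ends G (es ! m)), snd (ends G (es ! m))) = (vs ! m, vs ! (Suc m mod k)) \<or>
          (fst (ends G (es ! m)), snd (ends G (es ! m))) = (vs ! (Suc m mod k), vs ! m)"
        by (rule doubleton_cases[OF ed[OF Suc.prems]])
      ultimately show ?thesis by simp
    qed
    have upt: "[m..<k] = m # [Suc m..<k]" using Suc.prems upt_conv_Cons by blast
    show ?case
    proof (cases "Suc m = k")
      case True
      then have "Suc m mod k = 0" by simp
      then show ?thesis using step True unfolding upt F_def by simp
    next
      case False
      then have sm: "Suc m < k" using Suc.prems by simp
      then have "Suc m mod k = Suc m" by simp
      moreover have "walk G s (map F [Suc m..<k]) (vs ! Suc m) (vs ! 0)"
        using Suc.hyps(1)[of "Suc m"] Suc.hyps(2) sm by simp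
      ultimately show ?thesis using step unfolding upt F_def by simp
    qed
  qed
  define L where "L = map F [0..<k]"
  have "walk G s L (vs ! 0) (vs ! 0)" using W[of 0] k1 unfolding L_def by simp
  moreover have "L \<noteq> []" using k1 unfolding L_def by simp
  moreover have "wsign G L = prod_list (map (sgn G) es)"
  proof -
    have "map (\<lambda>(x, f, y). sgn G f) L = map (sgn G) (map ((!) es) [0..<k])"
      unfolding L_def F_def by simp
    also have "map ((!) es) [0..<k] = es" unfolding k_def by (rule map_nth)
    finally show ?thesis by (simp add: wsign_def)
  qed
  ultimately show ?thesis using neg unfolding negcw_def by (intro exI[of _ L] exI[of _ "vs ! 0"]) simp
qed


lemma take_drop_split: "i \<le> j \<Longrightarrow> L = take i L @ take (j - i) (drop i L) @ drop j L"
proof -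
  assume ij: "i \<le> j"
  have "drop i L = take (j - i) (drop i L) @ drop (j - i) (drop i L)" by (rule append_take_drop_id[symmetric])
  moreover have "drop (j - i) (drop i L) = drop j L" using ij by simp
  ultimately show ?thesis by (metis append_take_drop_id)
qed

lemma sq_not_neg1: "(x::int) * x \<noteq> -1"
proof -
  have "x * x \<ge> 0" by simp
  then show ?thesis by linarith
qed

lemma walk_circuit:
  assumes "L \<noteq> []" "walk G s L v v" "wsign G L = -1"
  shows "\<exists>es vs. circuit G s es vs \<and> prod_list (map (sgn G) es) = -1"
  using assms
proof (induction "length L" arbitrary: L v rule: less_induct)
  case less
  define k where "k = length L"
  have k1: "k \<ge> 1" using less.prems(1) unfolding k_def by (cases L) auto
  show ?case
  proof (cases "distinct (map fst L)")
    case True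
    define es where "es = map (fst \<circ> snd) L"
    define vs where "vs = map fst L"
    have les: "length es = k" "length vs = k" unfolding es_def vs_def k_def by simp_all
    have H: "es ! i \<in> s \<and> {fst (ends G (es ! i)), snd (ends G (es ! i))} = {vs ! i, vs ! (Suc i mod k)}"
      if i: "i < k" for i
    proof -
      obtain x f y where xfy: "L ! i = (x, f, y)" by (cases "L ! i") auto
      have w: "f \<in> s \<and> (ends G f = (x, y) \<or> ends G f = (y, x)) \<and> y = (if Suc i < k then fst (L ! Suc i) else v)"
        using walk_nth[OF less.prems(2) _ xfy] i unfolding k_def by blast
      have e: "es ! i = f" "vs ! i = x" using xfy i unfolding es_def vs_def k_def by simp_all
      have "vs ! (Suc i mod k) = y"
      proof (cases "Suc i < k")
        case True
        then show ?thesis using w unfolding vs_def k_def by simp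
      next
        case False
        then have "Suc i = k" using i by simp
        then have "Suc i mod k = 0" by simp
        moreover have "fst (L ! 0) = v" using walk_hd[OF less.prems(2,1)] less.prems(1) by (simp add: hd_conv_nth)
        moreover have "map fst L ! 0 = fst (L ! 0)" using less.prems(1) by (simp add: nth_map)
        ultimately show ?thesis using w False k1 unfolding vs_def k_def by simp
      qed
      then show ?thesis using w e by auto
    qed
    have dvs: "distinct vs" using True unfolding vs_def .
    have sign: "prod_list (map (sgn G) es) = wsign G L"
      unfolding es_def wsign_def by (simp add: comp_def split_def)
    have des: "distinct es"
    proof (rule ccontr)
      assume "\<not> distinct es"
      then obtain i j where ij0: "i < k" "j < k" "i \<noteq> j" "es ! i = es ! j"
        using les by (auto simp: distinct_conv_nth)
      have "\<exists>i j. i < j \<and> j < k \<and> es ! i = es ! j"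
      proof (cases "i < j")
        case True then show ?thesis using ij0 by blast
      next
        case False then show ?thesis using ij0 by (intro exI[of _ j] exI[of _ i]) auto
      qed
      then obtain i j where ij: "i < j" "j < k" "es ! i = es ! j" by blast
      have Hi: "{vs ! i, vs ! (Suc i mod k)} = {vs ! j, vs ! (Suc j mod k)}"
        using H[of i] H[of j] ij by auto
      have "vs ! i \<noteq> vs ! j" using dvs ij les nth_eq_iff_index_eq by fastforce
      then have e1: "vs ! i = vs ! (Suc j mod k)" and e2: "vs ! (Suc i mod k) = vs ! j"
        using Hi by (auto simp: doubleton_eq_iff)
      have "Suc j mod k < k" "Suc i mod k < k" using ij by auto
      then have q1: "i = Suc j mod k" "Suc i mod k = j"
        using nth_eq_iff_index_eq[OF dvs, of i "Suc j mod k"] nth_eq_iff_index_eq[OF dvs, of "Suc i mod k" j]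
          e1 e2 ij les by auto
      have "Suc i < k" using ij by simp
      then have ji: "j = Suc i" using q1(2) by simp
      have k2: "k = 2 \<and> i = 0 \<and> j = 1"
      proof (cases "Suc j < k")
        case True
        then have "Suc j mod k = Suc j" by simp
        then have "i = Suc j" using q1(1) by linarith
        then show ?thesis using ji by linarith
      next
        case False
        then have "Suc j = k" using ij by simp
        then have "Suc j mod k = 0" by simp
        then have "i = 0" using q1(1) by linarith
        then show ?thesis using ji \<open>Suc j = k\<close> by linarith
      qed
      have "[0..<length es] = [0, 1]" using les k2 by (simp add: upt_rec)
      then have "es = [es ! 0, es ! 1]" using map_nth[of es] by (metis list.simps(8,9))
      then have "map (sgn G) es = [sgn G (es ! 0), sgn G (es ! 1)]" by (metis list.simps(8,9))
      then have "prod_list (map (sgn G) es) = sgn G (es ! 0) * sgn G (es ! 1)" by simp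
      then have "prod_list (map (sgn G) es) = sgn G (es ! 0) * sgn G (es ! 0)" using ij k2 by simp
      then have "sgn G (es ! 0) * sgn G (es ! 0) = -1" using sign less.prems(3) by simp
      then show False using sq_not_neg1 by blast
    qed
    have "circuit G s es vs"
      unfolding circuit_def
    proof (intro conjI)
      show "length es = length vs" using les by simp
      show "1 \<le> length es" using les k1 by simp
      show "distinct es" by (rule des)
      show "distinct vs" by (rule dvs)
      show "set es \<subseteq> s" using H les by (auto simp: in_set_conv_nth)
      show "\<forall>i<length es. {fst (ends G (es ! i)), snd (ends G (es ! i))} = {vs ! i, vs ! (Suc i mod length es)}"
        using H les by simp
    qed
    then show ?thesis using sign less.prems(3) by auto
  next
    case False
    obtain i0 j0 where ij0: "i0 < k" "j0 < k" "i0 \<noteq> j0" "fst (L ! i0) = fst (L ! j0)"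
      using False unfolding k_def by (auto simp: distinct_conv_nth)
    have "\<exists>i j. i < j \<and> j < k \<and> fst (L ! i) = fst (L ! j)"
    proof (cases "i0 < j0")
      case True then show ?thesis using ij0 by blast
    next
      case False then show ?thesis using ij0 by (intro exI[of _ j0] exI[of _ i0]) auto
    qed
    then obtain i j where ij: "i < j" "j < k" "fst (L ! i) = fst (L ! j)" by blast
    define A where "A = take i L"
    define B where "B = take (j - i) (drop i L)"
    define C where "C = drop j L"
    have LABC: "L = A @ B @ C" unfolding A_def B_def C_def using take_drop_split[of i j L] ij(1) by simp
    obtain m1 where m1: "walk G s A v m1" "walk G s (B @ C) m1 v"
      using less.prems(2) LABC walk_append by metis
    obtain m2 where m2: "walk G s B m1 m2" "walk G s C m2 v"
      using m1(2) walk_append by metis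
    have Bne: "B \<noteq> []" unfolding B_def using ij k_def by simp
    have Cne: "C \<noteq> []" unfolding C_def using ij k_def by simp
    have "hd B = L ! i" unfolding B_def using ij k_def by (simp add: hd_conv_nth)
    then have "m1 = fst (L ! i)" using walk_hd[OF m2(1) Bne] by simp
    moreover have "hd C = L ! j" unfolding C_def using ij k_def by (simp add: hd_conv_nth)
    then have "m2 = fst (L ! j)" using walk_hd[OF m2(2) Cne] by simp
    ultimately have m12: "m1 = m2" using ij(3) by simp
    have wB: "walk G s B m1 m1" using m2(1) m12 by simp
    have wAC: "walk G s (A @ C) v v" using m1(1) m2(2) m12 walk_append by metis
    have ACne: "A @ C \<noteq> []" using Cne by simp
    have lB: "length B < length L" unfolding B_def using ij k_def by simp
    have lAC: "length (A @ C) < length L" unfolding A_def C_def using ij k_def by simp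
    have "wsign G L = wsign G B * wsign G (A @ C)"
      unfolding LABC wsign_append by simp
    then have "wsign G B = -1 \<or> wsign G (A @ C) = -1"
      using less.prems(3) zmult_eq_neg1_iff by auto
    then show ?thesis
    proof
      assume "wsign G B = -1"
      then show ?thesis using less.hyps[OF lB Bne wB] by blast
    next
      assume "wsign G (A @ C) = -1"
      then show ?thesis using less.hyps[OF lAC ACne wAC] by blast
    qed
  qed
qed

lemma balanced_negcw: "balanced G s \<longleftrightarrow> \<not> negcw G s"
proof
  assume b: "balanced G s"
  show "\<not> negcw G s"
  proof
    assume "negcw G s"
    then obtain L v where Lv: "L \<noteq> []" "walk G s L v v" "wsign G L = -1" unfolding negcw_def by auto
    obtain es vs where "circuit G s es vs" "prod_list (map (sgn G) es) = -1"
      using walk_circuit[OF Lv] by blast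
    then show False using b unfolding balanced_def by blast
  qed
next
  assume "\<not> negcw G s"
  then show "balanced G s" unfolding balanced_def using circuit_walk by metis
qed


section \<open>Contraction and balance\<close>

locale contr =
  fixes G G' :: "('v, 'e::linorder) sgraph" and e :: 'e and a b :: 'v and r :: "'v \<Rightarrow> 'v"
  assumes eG: "ends G e = (a, b)" and sg1: "sgn G e = 1"
    and eG': "\<And>f. ends G' f = map_prod r r (ends G f)" and sgn': "sgn G' = sgn G"
    and r_def: "r = (\<lambda>x. if x = b then a else x)"
begin

lemma r_a: "r a = a" and r_b: "r b = a" using r_def by auto

lemma r_eq: "r x = r y \<Longrightarrow> x \<noteq> y \<Longrightarrow> (x, y) = (a, b) \<or> (x, y) = (b, a)"
  using r_def by (auto split: if_splits)

lemma proj: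
  "walk G (insert e t) L u w \<Longrightarrow> \<exists>L'. walk G' t L' (r u) (r w) \<and> wsign G' L' = wsign G L"
proof (induction L arbitrary: u)
  case Nil then show ?case by (intro exI[of _ "[]"]) simp
next
  case (Cons st L)
  obtain x f y where st: "st = (x, f, y)" by (cases st)
  have h: "x = u" "f \<in> insert e t" "ends G f = (x, y) \<or> ends G f = (y, x)" "walk G (insert e t) L y w"
    using Cons.prems st by auto
  obtain L'' where L'': "walk G' t L'' (r y) (r w)" "wsign G' L'' = wsign G L" using Cons.IH[OF h(4)] by blast
  show ?case
  proof (cases "f = e")
    case True
    then have "r x = r y" using h(3) eG r_a r_b by auto
    then show ?thesis using L'' h(1) st True sg1 by (intro exI[of _ L'']) simp
  next
    case False
    then have ft: "f \<in> t" using h(2) by simp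
    have "ends G' f = (r x, r y) \<or> ends G' f = (r y, r x)" using h(3) eG'[of f] by auto
    then have "walk G' t ((r x, f, r y) # L'') (r u) (r w)" using ft L''(1) h(1) by simp
    moreover have "wsign G' ((r x, f, r y) # L'') = wsign G ((x, f, y) # L)" using L''(2) sgn' by simp
    ultimately show ?thesis using st by blast
  qed
qed

definition fixw :: "'v \<Rightarrow> 'v \<Rightarrow> ('v \<times> 'e \<times> 'v) list" where
  "fixw p q = (if p = q then [] else [(p, e, q)])"

lemma fixw: "r p = r q \<Longrightarrow> walk G (insert e t) (fixw p q) p q \<and> wsign G (fixw p q) = 1"
  using r_eq[of p q] eG sg1 by (auto simp: fixw_def)

lemma lift:
  "walk G' t L x y \<Longrightarrow> r p = x \<Longrightarrow> r q = y \<Longrightarrow> \<exists>L'. walk G (insert e t) L' p q \<and> wsign G L' = wsign G' L"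
proof (induction L arbitrary: x p)
  case Nil
  then have "r p = r q" by simp
  then show ?case using fixw[of p q] by auto
next
  case (Cons st L)
  obtain x' f y' where st: "st = (x', f, y')" by (cases st)
  have h: "x' = x" "f \<in> t" "ends G' f = (x, y') \<or> ends G' f = (y', x)" "walk G' t L y' y"
    using Cons.prems st by auto
  obtain p1 q1 where pq: "ends G f = (p1, q1)" by (cases "ends G f")
  have e': "ends G' f = (r p1, r q1)" using eG'[of f] pq by simp
  have "\<exists>p2 q2. r p2 = x \<and> r q2 = y' \<and> (ends G f = (p2, q2) \<or> ends G f = (q2, p2))"
    using h(3) e' pq by auto
  then obtain p2 q2 where p2: "r p2 = x" "r q2 = y'" "ends G f = (p2, q2) \<or> ends G f = (q2, p2)" by blast
  obtain L'' where L'': "walk G (insert e t) L'' q2 q" "wsign G L'' = wsign G' L"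
    using Cons.IH[OF h(4) p2(2) Cons.prems(3)] by blast
  have fx: "walk G (insert e t) (fixw p p2) p p2 \<and> wsign G (fixw p p2) = 1"
    using fixw[of p p2] p2(1) Cons.prems(2) by simp
  define L' where "L' = fixw p p2 @ [(p2, f, q2)] @ L''"
  have "walk G (insert e t) L' p q"
    unfolding L'_def walk_append using fx L''(1) p2(3) h(2) by auto
  moreover have "wsign G L' = wsign G' (st # L)"
    unfolding L'_def wsign_append using fx L''(2) st sgn' by simp
  ultimately show ?case by blast
qed

lemma bal_contr: "balanced G (insert e t) \<longleftrightarrow> balanced G' t"
proof -
  have A: "negcw G' t" if n: "negcw G (insert e t)"
  proof -
    obtain L v where Lv: "L \<noteq> []" "walk G (insert e t) L v v" "wsign G L = -1" using n unfolding negcw_def by auto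
    obtain L' where L': "walk G' t L' (r v) (r v)" "wsign G' L' = wsign G L" using proj[OF Lv(2)] by blast
    have "L' \<noteq> []" using L'(2) Lv(3) by auto
    then show ?thesis using L' Lv(3) unfolding negcw_def by auto
  qed
  have B: "negcw G (insert e t)" if n: "negcw G' t"
  proof -
    obtain L v where Lv: "L \<noteq> []" "walk G' t L v v" "wsign G' L = -1" using n unfolding negcw_def by auto
    obtain x f y L0 where L: "L = (x, f, y) # L0" using Lv(1) by (metis list.exhaust prod_cases3)
    have "x = v" "ends G' f = (x, y) \<or> ends G' f = (y, x)" using Lv(2) L by auto
    then have "\<exists>p. r p = v" using eG'[of f] by (cases "ends G f") auto
    then obtain p where p: "r p = v" by blast
    obtain L' where L': "walk G (insert e t) L' p p" "wsign G L' = wsign G' L" using lift[OF Lv(2) p p] by blast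
    have "L' \<noteq> []" using L'(2) Lv(3) by auto
    then show ?thesis using L' Lv(3) unfolding negcw_def by auto
  qed
  show ?thesis unfolding balanced_negcw using A B by blast
qed

end


locale contr2 = contr +
  assumes wfG: "wf_sgraph G" and eE: "e \<in> edges G" and EG': "edges G' = edges G - {e}"
    and VG': "verts G' = r ` verts G"
begin

lemma aV: "a \<in> verts G" and bV: "b \<in> verts G"
  using wfG eE eG unfolding wf_sgraph_def by force+

lemma finV: "finite (verts G)" and finE: "finite (edges G)"
  using wfG unfolding wf_sgraph_def by auto

lemma finV': "finite (verts G')" using finV VG' by simp

lemma adj_proj: "(x, y) \<in> adj G (insert e t) \<Longrightarrow> (r x, r y) \<in> (adj G' t)\<^sup>*"
proof -
  assume "(x, y) \<in> adj G (insert e t)"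
  then obtain f where f: "f \<in> insert e t" "ends G f = (x, y) \<or> ends G f = (y, x)" unfolding adj_def by blast
  show ?thesis
  proof (cases "f = e")
    case True
    then have "r x = r y" using f(2) eG r_a r_b by auto
    then show ?thesis by simp
  next
    case False
    then have "f \<in> t" using f(1) by simp
    moreover have "ends G' f = (r x, r y) \<or> ends G' f = (r y, r x)" using f(2) eG'[of f] by auto
    ultimately have "(r x, r y) \<in> adj G' t" unfolding adj_def by blast
    then show ?thesis by simp
  qed
qed

lemma rtr_proj: "(x, y) \<in> (adj G (insert e t))\<^sup>* \<Longrightarrow> (r x, r y) \<in> (adj G' t)\<^sup>*"
proof (induction rule: rtrancl_induct)
  case base then show ?case by (rule rtrancl_refl)
next
  case (step y z)
  show ?case by (rule rtrancl_trans[OF step.IH adj_proj[OF step(2)]])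
qed

lemma adj_e: "(p, r p) \<in> (adj G (insert e t))\<^sup>* \<and> (r p, p) \<in> (adj G (insert e t))\<^sup>*"
proof (cases "p = b")
  case True
  have "(b, a) \<in> adj G (insert e t)" "(a, b) \<in> adj G (insert e t)" using eG unfolding adj_def by blast+
  then show ?thesis using True r_b by auto
next
  case False then show ?thesis using r_def by simp
qed

lemma rtr_lift: "(x, y) \<in> (adj G' t)\<^sup>* \<Longrightarrow> r p = x \<Longrightarrow> r q = y \<Longrightarrow> (p, q) \<in> (adj G (insert e t))\<^sup>*"
proof (induction arbitrary: q rule: rtrancl_induct)
  case base
  then have "r p = r q" by simp
  then show ?case using adj_e[of p t] adj_e[of q t] rtrancl_trans by metis
next
  case (step y z)
  obtain f where f: "f \<in> t" "ends G' f = (y, z) \<or> ends G' f = (z, y)" using step(2) unfolding adj_def by blast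
  obtain p1 q1 where pq: "ends G f = (p1, q1)" by (cases "ends G f")
  have e': "ends G' f = (r p1, r q1)" using eG'[of f] pq by simp
  have "\<exists>p2 q2. r p2 = y \<and> r q2 = z \<and> (p2, q2) \<in> adj G (insert e t)"
  proof (cases "ends G' f = (y, z)")
    case True
    then have "r p1 = y" "r q1 = z" using e' by auto
    moreover have "(p1, q1) \<in> adj G (insert e t)" using pq f(1) unfolding adj_def by blast
    ultimately show ?thesis by blast
  next
    case False
    then have "r q1 = y" "r p1 = z" using e' f(2) by auto
    moreover have "(q1, p1) \<in> adj G (insert e t)" using pq f(1) unfolding adj_def by blast
    ultimately show ?thesis by blast
  qed
  then obtain p2 q2 where p2: "r p2 = y" "r q2 = z" "(p2, q2) \<in> adj G (insert e t)" by blast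
  have "(p, p2) \<in> (adj G (insert e t))\<^sup>*" using step.IH[OF step.prems(1) p2(1)] .
  moreover have "(q2, q) \<in> (adj G (insert e t))\<^sup>*"
    using adj_e[of q2 t] adj_e[of q t] p2(2) step.prems(2) rtrancl_trans by metis
  ultimately show ?case using p2(3) by (meson rtrancl_into_rtrancl rtrancl_trans)
qed

lemma conn_iff:
  assumes "p \<in> verts G" "q \<in> verts G"
  shows "(r p, r q) \<in> conn_rel G' t \<longleftrightarrow> (p, q) \<in> conn_rel G (insert e t)"
proof
  assume "(r p, r q) \<in> conn_rel G' t"
  then have "(r p, r q) \<in> (adj G' t)\<^sup>*" unfolding conn_rel_def by simp
  then show "(p, q) \<in> conn_rel G (insert e t)" using rtr_lift assms unfolding conn_rel_def by blast
next
  assume "(p, q) \<in> conn_rel G (insert e t)"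
  then have "(r p, r q) \<in> (adj G' t)\<^sup>*" using rtr_proj unfolding conn_rel_def by blast
  then show "(r p, r q) \<in> conn_rel G' t" using assms VG' unfolding conn_rel_def by blast
qed

lemma r_conn: "p \<in> verts G \<Longrightarrow> q \<in> verts G \<Longrightarrow> r p = r q \<Longrightarrow> (p, q) \<in> conn_rel G (insert e t)"
  using conn_iff conn_equiv[of G' t] VG'
  by (metis equiv_class_eq_iff equiv_class_self image_eqI Image_singleton_iff)

lemma class_image: "p \<in> verts G \<Longrightarrow> conn_rel G' t `` {r p} = r ` (conn_rel G (insert e t) `` {p})"
proof
  assume p: "p \<in> verts G"
  show "conn_rel G' t `` {r p} \<subseteq> r ` (conn_rel G (insert e t) `` {p})"
  proof
    fix y assume "y \<in> conn_rel G' t `` {r p}"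
    then have y: "(r p, y) \<in> conn_rel G' t" by simp
    then have "y \<in> verts G'" unfolding conn_rel_def by simp
    then obtain q where q: "q \<in> verts G" "y = r q" using VG' by blast
    then have "(p, q) \<in> conn_rel G (insert e t)" using conn_iff[OF p q(1)] y by simp
    then show "y \<in> r ` (conn_rel G (insert e t) `` {p})" using q by blast
  qed
  show "r ` (conn_rel G (insert e t) `` {p}) \<subseteq> conn_rel G' t `` {r p}"
  proof
    fix y assume "y \<in> r ` (conn_rel G (insert e t) `` {p})"
    then obtain q where q: "(p, q) \<in> conn_rel G (insert e t)" "y = r q" by blast
    then have "q \<in> verts G" unfolding conn_rel_def by simp
    then show "y \<in> conn_rel G' t `` {r p}" using conn_iff[OF p] q by simp
  qed
qed

lemma comps_contr: "comps G' t = (\<lambda>X. r ` X) ` comps G (insert e t)"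
proof
  show "comps G' t \<subseteq> (\<lambda>X. r ` X) ` comps G (insert e t)"
  proof
    fix Y assume "Y \<in> comps G' t"
    then obtain y where y: "y \<in> verts G'" "Y = conn_rel G' t `` {y}" unfolding comps_def by (auto elim: quotientE)
    then obtain p where p: "p \<in> verts G" "y = r p" using VG' by blast
    have "Y = r ` (conn_rel G (insert e t) `` {p})" using y p class_image by simp
    moreover have "conn_rel G (insert e t) `` {p} \<in> comps G (insert e t)" by (rule class_in_comps[OF p(1)])
    ultimately show "Y \<in> (\<lambda>X. r ` X) ` comps G (insert e t)" by blast
  qed
  show "(\<lambda>X. r ` X) ` comps G (insert e t) \<subseteq> comps G' t"
  proof
    fix Y assume "Y \<in> (\<lambda>X. r ` X) ` comps G (insert e t)"
    then obtain X where X: "X \<in> comps G (insert e t)" "Y = r ` X" by blast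
    then obtain p where p: "p \<in> verts G" "X = conn_rel G (insert e t) `` {p}" unfolding comps_def by (auto elim: quotientE)
    have "Y = conn_rel G' t `` {r p}" using X p class_image by simp
    moreover have "r p \<in> verts G'" using VG' p by simp
    ultimately show "Y \<in> comps G' t" using class_in_comps by simp
  qed
qed

lemma img_sub_iff:
  assumes st: "s \<subseteq> t" and X: "X \<in> comps G (insert e s)" and Z: "Z \<in> comps G (insert e t)"
  shows "r ` X \<subseteq> r ` Z \<longleftrightarrow> X \<subseteq> Z"
proof
  assume sub: "r ` X \<subseteq> r ` Z"
  obtain x where x: "x \<in> X" using comps_ne[OF X] by blast
  then obtain z where z: "z \<in> Z" "r x = r z" using sub by blast
  have xv: "x \<in> verts G" using comps_sub[OF X] x by blast
  have zv: "z \<in> verts G" using comps_sub[OF Z] z by blast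
  have "(z, x) \<in> conn_rel G (insert e t)" using r_conn[OF zv xv] z(2) by simp
  then have "x \<in> Z" using comps_eq_class[OF Z z(1)] by blast
  then have "X \<inter> Z \<noteq> {}" using x by blast
  then show "X \<subseteq> Z" using overlap_sub[OF _ X Z] st by blast
qed blast

lemma img_inj: "inj_on (\<lambda>X. r ` X) (comps G (insert e t))"
proof (rule inj_onI)
  fix X Y assume X: "X \<in> comps G (insert e t)" and Y: "Y \<in> comps G (insert e t)" and eq: "r ` X = r ` Y"
  have "X \<subseteq> Y" using img_sub_iff[OF subset_refl X Y] eq by simp
  then show "X = Y" using comps_disj[OF X Y] comps_ne[OF X] by blast
qed


definition cphi where
  "cphi t c = (\<lambda>X. X \<in> comps G (insert e t) \<and> c (r ` X))"

lemma comps_contr_mem: "X \<in> comps G (insert e t) \<Longrightarrow> r ` X \<in> comps G' t"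
  using comps_contr by blast

lemma comps_contr_obtain: "Y \<in> comps G' t \<Longrightarrow> \<exists>X\<in>comps G (insert e t). Y = r ` X"
  using comps_contr by blast

lemma lab_transport:
  assumes st: "s \<subseteq> t"
  shows "lab G (insert e s) (cphi s c) (insert e t) = cphi t (lab G' s c t)"
proof (rule ext)
  fix Z
  have st': "insert e s \<subseteq> insert e t" using st by blast
  show "lab G (insert e s) (cphi s c) (insert e t) Z = cphi t (lab G' s c t) Z"
  proof (cases "Z \<in> comps G (insert e t)")
    case False then show ?thesis unfolding lab_def cphi_def by blast
  next
    case True
    have "lab G' s c t (r ` Z) \<longleftrightarrow> (\<exists>X'\<in>comps G' s. X' \<subseteq> r ` Z \<and> c X')"
      unfolding lab_def using comps_contr_mem[OF True] by simp
    also have "\<dots> \<longleftrightarrow> (\<exists>X\<in>comps G (insert e s). r ` X \<subseteq> r ` Z \<and> c (r ` X))"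
      unfolding comps_contr[of s] by simp
    also have "\<dots> \<longleftrightarrow> (\<exists>X\<in>comps G (insert e s). X \<subseteq> Z \<and> c (r ` X))"
      using img_sub_iff[OF st _ True] by blast
    finally have "lab G' s c t (r ` Z) \<longleftrightarrow> (\<exists>X\<in>comps G (insert e s). X \<subseteq> Z \<and> c (r ` X))" .
    then show ?thesis using True unfolding lab_def cphi_def by blast
  qed
qed

lemma vn_transport:
  assumes st: "s \<subseteq> t"
  shows "vn G (insert e s) (cphi s c) (insert e t) \<longleftrightarrow> vn G' s c t"
proof
  assume "vn G (insert e s) (cphi s c) (insert e t)"
  then obtain Z X1 X2 where h: "Z \<in> comps G (insert e t)" "X1 \<in> comps G (insert e s)" "X2 \<in> comps G (insert e s)"
    "X1 \<noteq> X2" "X1 \<subseteq> Z" "X2 \<subseteq> Z" "cphi s c X1" "cphi s c X2" using vnE[OF finV] by metis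
  have "r ` X1 \<noteq> r ` X2" using img_inj[of s] h(2,3,4) unfolding inj_on_def by blast
  moreover have "r ` X1 \<subseteq> r ` Z" "r ` X2 \<subseteq> r ` Z" using h(5,6) by blast+
  moreover have "c (r ` X1)" "c (r ` X2)" using h(7,8) by (simp_all add: cphi_def)
  ultimately show "vn G' s c t"
    by (intro vnI[OF finV' comps_contr_mem[OF h(1)] comps_contr_mem[OF h(2)] comps_contr_mem[OF h(3)]])
next
  assume "vn G' s c t"
  then obtain Z' X1' X2' where h: "Z' \<in> comps G' t" "X1' \<in> comps G' s" "X2' \<in> comps G' s"
    "X1' \<noteq> X2'" "X1' \<subseteq> Z'" "X2' \<subseteq> Z'" "c X1'" "c X2'" using vnE[OF finV'] by metis
  obtain Z where Z: "Z \<in> comps G (insert e t)" "Z' = r ` Z" using comps_contr_obtain[OF h(1)] by blast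
  obtain X1 where X1: "X1 \<in> comps G (insert e s)" "X1' = r ` X1" using comps_contr_obtain[OF h(2)] by blast
  obtain X2 where X2: "X2 \<in> comps G (insert e s)" "X2' = r ` X2" using comps_contr_obtain[OF h(3)] by blast
  have "X1 \<noteq> X2" using h(4) X1 X2 by blast
  moreover have "X1 \<subseteq> Z" using img_sub_iff[OF st X1(1) Z(1)] h(5) X1 Z by simp
  moreover have "X2 \<subseteq> Z" using img_sub_iff[OF st X2(1) Z(1)] h(6) X2 Z by simp
  moreover have "cphi s c X1" "cphi s c X2" using X1 X2 h(7,8) by (simp_all add: cphi_def)
  ultimately show "vn G (insert e s) (cphi s c) (insert e t)"
    by (intro vnI[OF finV Z(1) X1(1) X2(1)])
qed

lemma xdeg_transport: "card {X \<in> comps G (insert e t). cphi t c X} = card {Y \<in> comps G' t. c Y}"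
proof -
  have eq: "{Y \<in> comps G' t. c Y} = (\<lambda>X. r ` X) ` {X \<in> comps G (insert e t). cphi t c X}"
  proof
    show "{Y \<in> comps G' t. c Y} \<subseteq> (\<lambda>X. r ` X) ` {X \<in> comps G (insert e t). cphi t c X}"
    proof
      fix Y assume "Y \<in> {Y \<in> comps G' t. c Y}"
      then obtain X where "X \<in> comps G (insert e t)" "Y = r ` X" "c Y" using comps_contr_obtain by blast
      then show "Y \<in> (\<lambda>X. r ` X) ` {X \<in> comps G (insert e t). cphi t c X}" by (auto simp: cphi_def)
    qed
    show "(\<lambda>X. r ` X) ` {X \<in> comps G (insert e t). cphi t c X} \<subseteq> {Y \<in> comps G' t. c Y}"
      using comps_contr_mem by (auto simp: cphi_def)
  qed
  have "inj_on (\<lambda>X. r ` X) {X \<in> comps G (insert e t). cphi t c X}"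
    using img_inj[of t] by (rule inj_on_subset) blast
  then show ?thesis unfolding eq by (simp add: card_image)
qed

lemma cphi_inj:
  assumes "\<forall>X. X \<notin> comps G' t \<longrightarrow> \<not> c X" "\<forall>X. X \<notin> comps G' t \<longrightarrow> \<not> c' X" "cphi t c = cphi t c'"
  shows "c = c'"
proof (rule ext)
  fix Y
  show "c Y = c' Y"
  proof (cases "Y \<in> comps G' t")
    case False then show ?thesis using assms(1,2) by blast
  next
    case True
    then obtain X where X: "X \<in> comps G (insert e t)" "Y = r ` X" using comps_contr_obtain by blast
    have "cphi t c X = cphi t c' X" using assms(3) by simp
    then show ?thesis using X by (simp add: cphi_def)
  qed
qed

definition phi where
  "phi U = (insert e (fst U), cphi (fst U) (snd U))"

lemma phi_in:
  assumes U: "U \<in> bstates G' n j"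
  shows "phi U \<in> bstates G (Suc n) j \<and> e \<in> fst (phi U)"
proof -
  obtain t c where Ud: "U = (t, c)" by (cases U)
  have t: "t \<subseteq> edges G - {e}" "card t = n" "balanced G' t" "\<forall>X. X \<notin> comps G' t \<longrightarrow> \<not> c X"
    "xdeg G' (t, c) = j" using U unfolding Ud bstates_def EG' by auto
  have ft: "finite t" using t(1) finE finite_subset by blast
  have "insert e t \<subseteq> edges G" using t(1) eE by blast
  moreover have "e \<notin> t" using t(1) by blast
  then have "card (insert e t) = Suc n" using t(2) ft by simp
  moreover have "balanced G (insert e t)" using t(3) bal_contr by simp
  moreover have "\<forall>X. X \<notin> comps G (insert e t) \<longrightarrow> \<not> cphi t c X" by (simp add: cphi_def)
  moreover have "xdeg G (insert e t, cphi t c) = j" using xdeg_transport t(5) by (simp add: xdeg_def)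
  ultimately show ?thesis unfolding phi_def Ud bstates_def by simp
qed

lemma phi_inj:
  assumes U: "U \<in> bstates G' n j" and U': "U' \<in> bstates G' n' j'" and eq: "phi U = phi U'"
  shows "U = U'"
proof -
  obtain t c where Ud: "U = (t, c)" by (cases U)
  obtain t' c' where Ud': "U' = (t', c')" by (cases U')
  have t: "t \<subseteq> edges G - {e}" "\<forall>X. X \<notin> comps G' t \<longrightarrow> \<not> c X" using U unfolding Ud bstates_def EG' by auto
  have t': "t' \<subseteq> edges G - {e}" "\<forall>X. X \<notin> comps G' t' \<longrightarrow> \<not> c' X" using U' unfolding Ud' bstates_def EG' by auto
  have "insert e t = insert e t'" using eq unfolding phi_def Ud Ud' by simp
  then have tt: "t = t'" using t(1) t'(1) insert_ident by blast
  have "cphi t c = cphi t c'" using eq unfolding phi_def Ud Ud' tt by simp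
  then have "c = c'" using cphi_inj t(2) t'(2) tt by blast
  then show ?thesis using Ud Ud' tt by simp
qed

lemma phi_surj:
  assumes T: "T \<in> bstates G (Suc n) j" and eT: "e \<in> fst T"
  shows "\<exists>U\<in>bstates G' n j. phi U = T"
proof -
  obtain t' c' where Td: "T = (t', c')" by (cases T)
  have h: "t' \<subseteq> edges G" "card t' = Suc n" "balanced G t'" "\<forall>X. X \<notin> comps G t' \<longrightarrow> \<not> c' X"
    "xdeg G (t', c') = j" using T unfolding Td bstates_def by auto
  have et: "e \<in> t'" using eT Td by simp
  define t where "t = t' - {e}"
  have it: "insert e t = t'" using et unfolding t_def by blast
  define c where "c = (\<lambda>Y. Y \<in> comps G' t \<and> (\<exists>X\<in>comps G t'. r ` X = Y \<and> c' X))"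
  have cc: "cphi t c = c'"
  proof (rule ext)
    fix X
    show "cphi t c X = c' X"
    proof (cases "X \<in> comps G t'")
      case False then show ?thesis using h(4) it by (simp add: cphi_def)
    next
      case True
      have "r ` X \<in> comps G' t" using comps_contr_mem[of X t] True it by simp
      moreover have "(\<exists>X2\<in>comps G t'. r ` X2 = r ` X \<and> c' X2) \<longleftrightarrow> c' X"
        using img_inj[of t] True it unfolding inj_on_def by metis
      ultimately show ?thesis using True it by (simp add: cphi_def c_def)
    qed
  qed
  have ft': "finite t'" using h(1) finE finite_subset by blast
  have "t \<subseteq> edges G'" using h(1) unfolding t_def EG' by blast
  moreover have "card t = n" using h(2) et ft' unfolding t_def by simp
  moreover have "balanced G' t" using bal_contr[of t] h(3) it by simp
  moreover have "\<forall>X. X \<notin> comps G' t \<longrightarrow> \<not> c X" unfolding c_def by blast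
  moreover have "xdeg G' (t, c) = j"
    using xdeg_transport[of t c] h(5) cc it by (simp add: xdeg_def)
  ultimately have "(t, c) \<in> bstates G' n j" unfolding bstates_def by simp
  moreover have "phi (t, c) = T" unfolding phi_def Td using it cc by simp
  ultimately show ?thesis by blast
qed


definition eps where
  "eps t = ((-1::int) ^ card {f \<in> t. e < f})"

lemma eps_insert:
  assumes "finite s" "e' \<notin> s" "e' \<noteq> e"
  shows "eps (insert e' s) = (if e < e' then - eps s else eps s)"
proof (cases "e < e'")
  case True
  have "{f \<in> insert e' s. e < f} = insert e' {f \<in> s. e < f}" using True by auto
  moreover have "card (insert e' {f \<in> s. e < f}) = Suc (card {f \<in> s. e < f})" using assms by simp
  ultimately show ?thesis using True by (simp add: eps_def)
next
  case False
  have "{f \<in> insert e' s. e < f} = {f \<in> s. e < f}" using False by auto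
  then show ?thesis using False by (simp add: eps_def)
qed

lemma K:
  assumes U: "U \<in> bstates G' n j" and V: "V \<in> bstates G' (Suc n) j"
  shows "eps (fst U) * dcoef G (phi U) (phi V) = eps (fst V) * dcoef G' U V"
proof -
  obtain s c where Ud: "U = (s, c)" by (cases U)
  obtain t c2 where Vd: "V = (t, c2)" by (cases V)
  have hs: "s \<subseteq> edges G - {e}" "\<forall>X. X \<notin> comps G' s \<longrightarrow> \<not> c X" using U unfolding Ud bstates_def EG' by auto
  have ht: "t \<subseteq> edges G - {e}" "\<forall>X. X \<notin> comps G' t \<longrightarrow> \<not> c2 X" using V unfolding Vd bstates_def EG' by auto
  have fs: "finite s" using hs(1) finE finite_subset by blast
  have es: "e \<notin> s" "e \<notin> t" using hs(1) ht(1) by blast+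
  have idx: "edges G' - s = edges G - insert e s" using EG' by blast
  define C1 where "C1 e' = (balanced G (insert e t) \<and> \<not> vn G (insert e s) (cphi s c) (insert e' (insert e s)) \<and>
      (insert e t, cphi t c2) = (insert e' (insert e s), lab G (insert e s) (cphi s c) (insert e' (insert e s))))" for e'
  define C2 where "C2 e' = (balanced G' t \<and> \<not> vn G' s c (insert e' s) \<and> (t, c2) = (insert e' s, lab G' s c (insert e' s)))" for e'
  have L: "dcoef G (phi U) (phi V) = (\<Sum>e'\<in>edges G - insert e s. if C1 e' then sg (insert e s) e' else 0)"
    unfolding dcoef_alt phi_def Ud Vd fst_conv snd_conv C1_def ..
  have R: "dcoef G' U V = (\<Sum>e'\<in>edges G - insert e s. if C2 e' then sg s e' else 0)"
    unfolding dcoef_alt Ud Vd fst_conv snd_conv C2_def idx ..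
  have tmeq: "eps s * (if C1 e' then sg (insert e s) e' else 0) = eps t * (if C2 e' then sg s e' else 0)"
    if e': "e' \<in> edges G - insert e s" for e'
  proof -
    have ne: "e' \<noteq> e" "e' \<notin> s" using e' by auto
    have ss: "s \<subseteq> insert e' s" by blast
    have ins: "insert e' (insert e s) = insert e (insert e' s)" by (rule insert_commute)
    have eq: "C1 e' = C2 e'"
    proof -
      have "balanced G (insert e t) = balanced G' t" by (rule bal_contr)
      moreover have "vn G (insert e s) (cphi s c) (insert e' (insert e s)) = vn G' s c (insert e' s)"
        unfolding ins by (rule vn_transport[OF ss])
      moreover have "((insert e t, cphi t c2) = (insert e' (insert e s), lab G (insert e s) (cphi s c) (insert e' (insert e s))))
          = ((t, c2) = (insert e' s, lab G' s c (insert e' s)))"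
      proof -
        have l: "lab G (insert e s) (cphi s c) (insert e (insert e' s)) = cphi (insert e' s) (lab G' s c (insert e' s))"
          by (rule lab_transport[OF ss])
        have ieq: "(insert e t = insert e (insert e' s)) = (t = insert e' s)"
        proof (rule insert_ident)
          show "e \<notin> t" by (rule es(2))
          show "e \<notin> insert e' s" using es(1) ne(1) by blast
        qed
        have offL: "\<forall>X. X \<notin> comps G' t \<longrightarrow> \<not> lab G' s c t X" unfolding lab_def by blast
        have inj: "cphi t c2 = cphi t (lab G' s c t) \<Longrightarrow> c2 = lab G' s c t"
          by (rule cphi_inj[OF ht(2) offL])
        show ?thesis unfolding ins l
        proof
          assume A: "(insert e t, cphi t c2) = (insert e (insert e' s), cphi (insert e' s) (lab G' s c (insert e' s)))"
          then have tt: "t = insert e' s" using ieq by simp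
          then have "cphi t c2 = cphi t (lab G' s c t)" using A by simp
          then have "c2 = lab G' s c t" by (rule inj)
          then show "(t, c2) = (insert e' s, lab G' s c (insert e' s))" using tt by simp
        next
          assume "(t, c2) = (insert e' s, lab G' s c (insert e' s))"
          then show "(insert e t, cphi t c2) = (insert e (insert e' s), cphi (insert e' s) (lab G' s c (insert e' s)))" by simp
        qed
      qed
      ultimately show ?thesis unfolding C1_def C2_def by simp
    qed
    show ?thesis
    proof (cases "C2 e'")
      case False then show ?thesis using eq by simp
    next
      case True
      then have tt: "t = insert e' s" unfolding C2_def by simp
      have "eps t = (if e < e' then - eps s else eps s)" unfolding tt by (rule eps_insert[OF fs ne(2) ne(1)])
      moreover have "sg (insert e s) e' = (if e < e' then - sg s e' else sg s e')" by (rule sg_insert[OF fs es(1)])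
      ultimately show ?thesis using True eq by simp
    qed
  qed
  have "eps s * dcoef G (phi U) (phi V) = (\<Sum>e'\<in>edges G - insert e s. eps s * (if C1 e' then sg (insert e s) e' else 0))"
    unfolding L by (rule sum_distrib_left)
  also have "\<dots> = (\<Sum>e'\<in>edges G - insert e s. eps t * (if C2 e' then sg s e' else 0))"
    by (rule sum.cong[OF refl tmeq])
  also have "\<dots> = eps t * dcoef G' U V"
    unfolding R by (rule sum_distrib_left[symmetric])
  finally show ?thesis using Ud Vd by simp
qed

end


lemma comps_delete: "comps (delete_edge G e) s = comps G s"
  by (simp add: comps_def conn_rel_def adj_def delete_edge_def)

lemma balanced_delete: "balanced (delete_edge G e) s = balanced G s"
  by (simp add: balanced_def circuit_def delete_edge_def)

lemma edges_delete: "edges (delete_edge G e) = edges G - {e}"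
  by (simp add: delete_edge_def)

lemma bstates_delete: "bstates (delete_edge G e) n j = {T \<in> bstates G n j. e \<notin> fst T}"
  unfolding bstates_def xdeg_def comps_delete balanced_delete edges_delete by auto

lemma lab_delete: "lab (delete_edge G e) = lab G"
  by (simp add: lab_def comps_delete fun_eq_iff)

lemma vn_delete: "vn (delete_edge G e) = vn G"
  by (simp add: vn_def comps_delete fun_eq_iff)

lemma dcoef_delete:
  assumes "e \<notin> fst T" and fE: "finite (edges G)"
  shows "dcoef (delete_edge G e) S T = dcoef G S T"
proof -
  have E: "edges (delete_edge G e) - fst S \<subseteq> edges G - fst S" by (auto simp: delete_edge_def)
  show ?thesis
    unfolding dcoef_alt lab_delete vn_delete balanced_delete
  proof (rule sum.mono_neutral_left)
    show "finite (edges G - fst S)" using fE by simp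
    show "edges (delete_edge G e) - fst S \<subseteq> edges G - fst S" by (rule E)
  qed (use assms(1) in \<open>auto simp: delete_edge_def\<close>)
qed

lemma sum_nz: assumes "sum g A \<noteq> 0" shows "\<exists>x\<in>A. g x \<noteq> 0"
proof (rule ccontr)
  assume "\<not> (\<exists>x\<in>A. g x \<noteq> 0)"
  then have "\<forall>x\<in>A. g x = 0" by blast
  then show False using sum.neutral[of A g] assms by simp
qed

lemma dcoef_sub: "dcoef G S T \<noteq> 0 \<Longrightarrow> fst S \<subseteq> fst T"
proof -
  assume "dcoef G S T \<noteq> 0"
  from sum_nz[OF this[unfolded dcoef_alt]] obtain e' where "(if balanced G (fst T) \<and> \<not> vn G (fst S) (snd S) (insert e' (fst S)) \<and>
            T = (insert e' (fst S), lab G (fst S) (snd S) (insert e' (fst S))) then sg (fst S) e' else 0) \<noteq> 0"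
    by blast
  then have "T = (insert e' (fst S), lab G (fst S) (snd S) (insert e' (fst S)))" by (auto split: if_splits)
  then show ?thesis by auto
qed


context contr2
begin

lemma wfG': "wf_sgraph G'"
proof -
  have "fst (ends G' f) \<in> verts G' \<and> snd (ends G' f) \<in> verts G' \<and> sgn G' f \<in> {1, -1}" if f: "f \<in> edges G'" for f
  proof -
    have fG: "f \<in> edges G" using f EG' by blast
    then have "fst (ends G f) \<in> verts G" "snd (ends G f) \<in> verts G" "sgn G f \<in> {1, -1}"
      using wfG unfolding wf_sgraph_def by auto
    then show ?thesis using eG'[of f] sgn' VG' by (cases "ends G f") auto
  qed
  moreover have "finite (edges G')" using finE EG' by simp
  ultimately show ?thesis using finV' unfolding wf_sgraph_def by blast
qed

lemma eps_sq: "eps t * eps t = 1"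
  unfolding eps_def by (simp add: power_mult_distrib[symmetric])

definition al where
  "al j n f = (\<lambda>T. \<Sum>U\<in>bstates G' n j. if phi U = T then eps (fst U) * f U else 0)"

definition pr where
  "pr (n::nat) g = (\<lambda>T. if e \<in> fst T then 0 else (g T :: int))"

lemma al_phi: "U \<in> bstates G' n j \<Longrightarrow> al j n f (phi U) = eps (fst U) * f U"
proof -
  assume U: "U \<in> bstates G' n j"
  have "al j n f (phi U) = (\<Sum>U'\<in>bstates G' n j. if U' = U then eps (fst U') * f U' else 0)"
    unfolding al_def using phi_inj[OF _ U] by (intro sum.cong) auto
  also have "\<dots> = eps (fst U) * f U" using U bstates_finite[OF wfG'] by simp
  finally show ?thesis .
qed

lemma al_nonimg: "\<forall>U\<in>bstates G' n j. phi U \<noteq> T \<Longrightarrow> al j n f T = 0"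
  unfolding al_def by (intro sum.neutral) auto

lemma L_linal: "lin (bstates G' n j) (bstates G (Suc n) j) (al j n)"
  unfolding lin_def
proof (intro conjI ballI)
  fix x assume "x \<in> car (bstates G' n j)"
  have "al j n x T = 0" if T: "T \<notin> bstates G (Suc n) j" for T
  proof -
    have "\<forall>U\<in>bstates G' n j. phi U \<noteq> T" using phi_in T by blast
    then show ?thesis by (rule al_nonimg)
  qed
  then show "al j n x \<in> car (bstates G (Suc n) j)" unfolding car_def by blast
next
  fix x y assume "x \<in> car (bstates G' n j)" "y \<in> car (bstates G' n j)"
  show "al j n (x + y) = al j n x + al j n y"
  proof (rule ext)
    fix T
    have "al j n (x + y) T = (\<Sum>U\<in>bstates G' n j. (if phi U = T then eps (fst U) * x U else 0) + (if phi U = T then eps (fst U) * y U else 0))"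
      unfolding al_def by (intro sum.cong) (auto simp: distrib_left)
    also have "\<dots> = al j n x T + al j n y T" unfolding al_def by (rule sum.distrib)
    finally show "al j n (x + y) T = (al j n x + al j n y) T" by simp
  qed
qed

lemma L_injal: "x \<in> car (bstates G' n j) \<Longrightarrow> al j n x = 0 \<Longrightarrow> x = 0"
proof (rule ext)
  fix U assume x: "x \<in> car (bstates G' n j)" and a: "al j n x = 0"
  show "x U = 0 U"
  proof (cases "U \<in> bstates G' n j")
    case True
    have "eps (fst U) * x U = 0" using al_phi[OF True, of x] a by simp
    moreover have "eps (fst U) \<noteq> 0" using eps_sq[of "fst U"] by auto
    ultimately show ?thesis by simp
  next
    case False then have "x U = 0" using x unfolding car_def by blast then show ?thesis by simp
  qed
qed

lemma L_linpr: "lin (bstates G n j) (bstates (delete_edge G e) n j) (pr n)"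
  unfolding lin_def
proof (intro conjI ballI)
  fix x assume x: "x \<in> car (bstates G n j)"
  show "pr n x \<in> car (bstates (delete_edge G e) n j)"
    using x unfolding car_def pr_def bstates_delete by auto
next
  fix x y show "pr n (x + y) = pr n x + pr n y" unfolding pr_def by (rule ext) simp
qed

lemma L_surj: "c \<in> car (bstates (delete_edge G e) n j) \<Longrightarrow> \<exists>b\<in>car (bstates G n j). pr n b = c"
proof -
  assume c: "c \<in> car (bstates (delete_edge G e) n j)"
  have "c \<in> car (bstates G n j)" using c unfolding car_def bstates_delete by auto
  moreover have "pr n c = c" using c unfolding car_def pr_def bstates_delete by (auto simp: fun_eq_iff)
  ultimately show ?thesis by blast
qed

lemma L_exact_mid:
  assumes bb: "bb \<in> car (bstates G (Suc n) j)" and p: "pr (Suc n) bb = 0"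
  shows "\<exists>aa\<in>car (bstates G' n j). al j n aa = bb"
proof -
  define aa where "aa U = (if U \<in> bstates G' n j then eps (fst U) * bb (phi U) else 0)" for U
  have ac: "aa \<in> car (bstates G' n j)" unfolding car_def aa_def by simp
  have "al j n aa = bb"
  proof (rule ext)
    fix T
    show "al j n aa T = bb T"
    proof (cases "\<exists>U\<in>bstates G' n j. phi U = T")
      case True
      then obtain U where U: "U \<in> bstates G' n j" "phi U = T" by blast
      have "al j n aa T = eps (fst U) * (eps (fst U) * bb T)" using al_phi[OF U(1)] U by (simp add: aa_def)
      also have "\<dots> = bb T" using eps_sq[of "fst U"] by (simp add: mult.assoc[symmetric])
      finally show ?thesis .
    next
      case False
      then have "al j n aa T = 0" using al_nonimg by blast
      moreover have "bb T = 0"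
      proof (cases "e \<in> fst T")
        case False
        then show ?thesis using fun_cong[OF p, of T] unfolding pr_def by simp
      next
        case True
        then have "T \<notin> bstates G (Suc n) j" using phi_surj \<open>\<not> (\<exists>U\<in>bstates G' n j. phi U = T)\<close> by blast
        then show ?thesis using bb unfolding car_def by blast
      qed
      ultimately show ?thesis by simp
    qed
  qed
  then show ?thesis using ac by blast
qed

lemma L_pr_al: "pr (Suc n) (al j n aa) = 0"
proof (rule ext)
  fix T
  show "pr (Suc n) (al j n aa) T = 0 T"
  proof (cases "e \<in> fst T")
    case True then show ?thesis by (simp add: pr_def)
  next
    case False
    then have "\<forall>U\<in>bstates G' n j. phi U \<noteq> T" using phi_in by blast
    then show ?thesis using al_nonimg False by (simp add: pr_def)
  qed
qed

lemma L_exact0: "bb \<in> car (bstates G 0 j) \<Longrightarrow> pr 0 bb = 0 \<Longrightarrow> bb = 0"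
proof (rule ext)
  fix T assume bb: "bb \<in> car (bstates G 0 j)" and p: "pr 0 bb = 0"
  show "bb T = 0 T"
  proof (cases "T \<in> bstates G 0 j")
    case True
    then have "fst T \<subseteq> edges G" "card (fst T) = 0" unfolding bstates_def by auto
    then have "fst T = {}" using finE finite_subset by fastforce
    then show ?thesis using fun_cong[OF p, of T] unfolding pr_def by simp
  next
    case False then have "bb T = 0" using bb unfolding car_def by blast then show ?thesis by simp
  qed
qed

lemma L_chain_pr:
  assumes bb: "bb \<in> car (bstates G n j)"
  shows "pr (Suc n) (dmap G n j bb) = dmap (delete_edge G e) n j (pr n bb)"
proof (rule ext)
  fix T
  show "pr (Suc n) (dmap G n j bb) T = dmap (delete_edge G e) n j (pr n bb) T"
  proof (cases "e \<in> fst T")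
    case True
    then show ?thesis unfolding pr_def dmap_def bstates_delete by simp
  next
    case False
    show ?thesis
    proof (cases "T \<in> bstates G (Suc n) j")
      case Tn: False
      then show ?thesis using False unfolding pr_def dmap_def bstates_delete by simp
    next
      case Tn: True
      have "(\<Sum>S\<in>bstates (delete_edge G e) n j. pr n bb S * dcoef (delete_edge G e) S T)
          = (\<Sum>S\<in>bstates (delete_edge G e) n j. bb S * dcoef G S T)"
        unfolding bstates_delete pr_def using dcoef_delete[OF False finE] by (intro sum.cong) auto
      also have "\<dots> = (\<Sum>S\<in>bstates G n j. bb S * dcoef G S T)"
      proof (rule sum.mono_neutral_left)
        show "finite (bstates G n j)" by (rule bstates_finite[OF wfG])
        show "bstates (delete_edge G e) n j \<subseteq> bstates G n j" unfolding bstates_delete by blast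
        show "\<forall>S\<in>bstates G n j - bstates (delete_edge G e) n j. bb S * dcoef G S T = 0"
        proof
          fix S assume "S \<in> bstates G n j - bstates (delete_edge G e) n j"
          then have "e \<in> fst S" unfolding bstates_delete by blast
          then have "dcoef G S T = 0" using dcoef_sub False by blast
          then show "bb S * dcoef G S T = 0" by simp
        qed
      qed
      finally show ?thesis using False Tn unfolding pr_def dmap_def bstates_delete by simp
    qed
  qed
qed

lemma L_chain_al:
  assumes aa: "aa \<in> car (bstates G' n j)"
  shows "dmap G (Suc n) j (al j n aa) = al j (Suc n) (dmap G' n j aa)"
proof (rule ext)
  fix T
  have BAf: "finite (bstates G' n j)" by (rule bstates_finite[OF wfG'])
  have BBf: "finite (bstates G (Suc n) j)" by (rule bstates_finite[OF wfG])
  have LHS: "(\<Sum>S\<in>bstates G (Suc n) j. al j n aa S * dcoef G S T)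
      = (\<Sum>U\<in>bstates G' n j. eps (fst U) * aa U * dcoef G (phi U) T)"
  proof -
    have "(\<Sum>S\<in>bstates G (Suc n) j. al j n aa S * dcoef G S T)
        = (\<Sum>S\<in>bstates G (Suc n) j. \<Sum>U\<in>bstates G' n j. if phi U = S then eps (fst U) * aa U * dcoef G S T else 0)"
      unfolding al_def sum_distrib_right by (intro sum.cong) auto
    also have "\<dots> = (\<Sum>U\<in>bstates G' n j. \<Sum>S\<in>bstates G (Suc n) j. if phi U = S then eps (fst U) * aa U * dcoef G S T else 0)"
      by (rule sum.swap)
    also have "\<dots> = (\<Sum>U\<in>bstates G' n j. eps (fst U) * aa U * dcoef G (phi U) T)"
    proof (rule sum.cong[OF refl])
      fix U assume U: "U \<in> bstates G' n j"
      have "phi U \<in> bstates G (Suc n) j" using phi_in[OF U] by blast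
      then show "(\<Sum>S\<in>bstates G (Suc n) j. if phi U = S then eps (fst U) * aa U * dcoef G S T else 0)
          = eps (fst U) * aa U * dcoef G (phi U) T"
        using sum.delta'[OF BBf, of "phi U" "\<lambda>S. eps (fst U) * aa U * dcoef G S T"] by simp
    qed
    finally show ?thesis .
  qed
  show "dmap G (Suc n) j (al j n aa) T = al j (Suc n) (dmap G' n j aa) T"
  proof (cases "\<exists>V\<in>bstates G' (Suc n) j. phi V = T")
    case True
    then obtain V where V: "V \<in> bstates G' (Suc n) j" "phi V = T" by blast
    have TB: "T \<in> bstates G (Suc (Suc n)) j" using phi_in[OF V(1)] V(2) by blast
    have "al j (Suc n) (dmap G' n j aa) T = eps (fst V) * dmap G' n j aa V" using al_phi[OF V(1)] V(2) by simp
    also have "\<dots> = eps (fst V) * (\<Sum>U\<in>bstates G' n j. aa U * dcoef G' U V)" using V(1) by (simp add: dmap_def)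
    also have "\<dots> = (\<Sum>U\<in>bstates G' n j. aa U * (eps (fst V) * dcoef G' U V))"
      by (simp add: sum_distrib_left mult.left_commute)
    also have "\<dots> = (\<Sum>U\<in>bstates G' n j. aa U * (eps (fst U) * dcoef G (phi U) (phi V)))"
      using K[OF _ V(1)] by (intro sum.cong) auto
    also have "\<dots> = (\<Sum>S\<in>bstates G (Suc n) j. al j n aa S * dcoef G S T)"
      unfolding V(2) LHS by (intro sum.cong refl) (simp add: mult.assoc mult.left_commute)
    also have "\<dots> = dmap G (Suc n) j (al j n aa) T" using TB by (simp add: dmap_def)
    finally show ?thesis by simp
  next
    case False
    then have R: "al j (Suc n) (dmap G' n j aa) T = 0" using al_nonimg by blast
    show ?thesis
    proof (cases "T \<in> bstates G (Suc (Suc n)) j")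
      case TB: True
      then have eT: "e \<notin> fst T" using phi_surj False by blast
      have "dcoef G (phi U) T = 0" if "U \<in> bstates G' n j" for U
        using phi_in[OF that] dcoef_sub eT by blast
      then have "(\<Sum>U\<in>bstates G' n j. eps (fst U) * aa U * dcoef G (phi U) T) = 0" by simp
      then show ?thesis using R LHS TB by (simp add: dmap_def)
    next
      case False
      then show ?thesis using R by (simp add: dmap_def)
    qed
  qed
qed

lemma ses_inst:
  "ses (\<lambda>n. bstates G' n j) (\<lambda>n. bstates G n j) (\<lambda>n. bstates (delete_edge G e) n j)
     (\<lambda>n. dmap G' n j) (\<lambda>n. dmap G n j) (\<lambda>n. dmap (delete_edge G e) n j) (al j) pr"
  apply unfold_locales
  apply (rule dmap_lin)
  apply (rule dmap_lin)
  apply (rule dmap_lin)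
  apply (erule dmap_sq[OF wfG])
  apply (rule L_linal)
  apply (erule (1) L_injal)
  apply (rule L_linpr)
  apply (erule L_surj)
  apply (erule (1) L_exact_mid)
  apply (rule L_pr_al)
  apply (erule (1) L_exact0)
  apply (erule L_chain_pr)
  apply (erule L_chain_al)
  done

end


lemma contract_props:
  assumes ab: "ends G e = (a, b)" and r: "r = (\<lambda>x. if x = b then a else x)"
    and aV: "a \<in> verts G" and bV: "b \<in> verts G"
  shows "ends (contract_edge G e) f = map_prod r r (ends G f)" "sgn (contract_edge G e) = sgn G"
    "edges (contract_edge G e) = edges G - {e}" "verts (contract_edge G e) = r ` verts G"
proof -
  have "(ends (contract_edge G e) f = map_prod r r (ends G f)) \<and> sgn (contract_edge G e) = sgn G \<and>
    edges (contract_edge G e) = edges G - {e} \<and> verts (contract_edge G e) = r ` verts G"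
  proof (cases "a = b")
    case True
    then have rid: "r = id" using r by (auto simp: fun_eq_iff)
    then show ?thesis using True ab unfolding contract_edge_def delete_edge_def
      by (simp add: map_prod.id)
  next
    case False
    have "r ` verts G = verts G - {b}"
    proof
      show "r ` verts G \<subseteq> verts G - {b}" using r aV False by auto
      show "verts G - {b} \<subseteq> r ` verts G"
      proof
        fix x assume x: "x \<in> verts G - {b}"
        then have "r x = x" using r by simp
        then show "x \<in> r ` verts G" using x by (metis DiffD1 image_eqI)
      qed
    qed
    then show ?thesis using False ab r unfolding contract_edge_def by (simp add: Let_def)
  qed
  then show "ends (contract_edge G e) f = map_prod r r (ends G f)" "sgn (contract_edge G e) = sgn G"
    "edges (contract_edge G e) = edges G - {e}" "verts (contract_edge G e) = r ` verts G" by auto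
qed

theorem corollary4p17:
  fixes SG :: "('v, 'e::linorder) sgraph" and e :: 'e
  assumes "wf_sgraph SG" and "e \<in> edges SG" and "sgn SG e = 1"
  shows "\<forall>j. \<exists>\<beta> \<gamma> \<delta>.
     (\<forall>i. \<beta> i \<in> hom (bcohom SG i j) (bcohom (delete_edge SG e) i j)) \<and>
     (\<forall>i. \<gamma> i \<in> hom (bcohom (delete_edge SG e) i j) (bcohom (contract_edge SG e) i j)) \<and>
     (\<forall>i. \<delta> i \<in> hom (bcohom (contract_edge SG e) i j) (bcohom SG (Suc i) j)) \<and>
     kernel (bcohom SG 0 j) (bcohom (delete_edge SG e) 0 j) (\<beta> 0)
        = {\<one>\<^bsub>bcohom SG 0 j\<^esub>} \<and>
     (\<forall>i. kernel (bcohom SG (Suc i) j) (bcohom (delete_edge SG e) (Suc i) j) (\<beta> (Suc i))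
        = \<delta> i ` carrier (bcohom (contract_edge SG e) i j)) \<and>
     (\<forall>i. kernel (bcohom (delete_edge SG e) i j) (bcohom (contract_edge SG e) i j) (\<gamma> i)
        = \<beta> i ` carrier (bcohom SG i j)) \<and>
     (\<forall>i. kernel (bcohom (contract_edge SG e) i j) (bcohom SG (Suc i) j) (\<delta> i)
        = \<gamma> i ` carrier (bcohom (delete_edge SG e) i j))"
proof
  fix j
  obtain a b where ab: "ends SG e = (a, b)" by (cases "ends SG e")
  define r where "r = (\<lambda>x. if x = b then a else x)"
  have aV: "a \<in> verts SG" and bV: "b \<in> verts SG"
    using assms(1,2) ab unfolding wf_sgraph_def by force+
  note cp = contract_props[OF ab r_def aV bV]
  have c2: "contr2 SG (contract_edge SG e) e a b r"
  proof (unfold_locales)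
    show "ends SG e = (a, b)" by (rule ab)
    show "sgn SG e = 1" by (rule assms(3))
    show "\<And>f. ends (contract_edge SG e) f = map_prod r r (ends SG f)" by (rule cp(1))
    show "sgn (contract_edge SG e) = sgn SG" by (rule cp(2))
    show "r = (\<lambda>x. if x = b then a else x)" by (rule r_def)
    show "wf_sgraph SG" by (rule assms(1))
    show "e \<in> edges SG" by (rule assms(2))
    show "edges (contract_edge SG e) = edges SG - {e}" by (rule cp(3))
    show "verts (contract_edge SG e) = r ` verts SG" by (rule cp(4))
  qed

  show "\<exists>\<beta> \<gamma> \<delta>.
     (\<forall>i. \<beta> i \<in> hom (bcohom SG i j) (bcohom (delete_edge SG e) i j)) \<and>
     (\<forall>i. \<gamma> i \<in> hom (bcohom (delete_edge SG e) i j) (bcohom (contract_edge SG e) i j)) \<and>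
     (\<forall>i. \<delta> i \<in> hom (bcohom (contract_edge SG e) i j) (bcohom SG (Suc i) j)) \<and>
     kernel (bcohom SG 0 j) (bcohom (delete_edge SG e) 0 j) (\<beta> 0)
        = {\<one>\<^bsub>bcohom SG 0 j\<^esub>} \<and>
     (\<forall>i. kernel (bcohom SG (Suc i) j) (bcohom (delete_edge SG e) (Suc i) j) (\<beta> (Suc i))
        = \<delta> i ` carrier (bcohom (contract_edge SG e) i j)) \<and>
     (\<forall>i. kernel (bcohom (delete_edge SG e) i j) (bcohom (contract_edge SG e) i j) (\<gamma> i)
        = \<beta> i ` carrier (bcohom SG i j)) \<and>
     (\<forall>i. kernel (bcohom (contract_edge SG e) i j) (bcohom SG (Suc i) j) (\<delta> i)
        = \<gamma> i ` carrier (bcohom (delete_edge SG e) i j))"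
    unfolding bcohom_coh by (rule ses.les[OF contr2.ses_inst[OF c2]])
qed


end
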